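(* Let $W\in\mathbb{R}^{n\times n}$ be positive definite (i.e. $x^TWx>0$ for all nonzero $x$; $W$ need not be symmetric), with symmetric part $H=\frac12(W+W^T)$ and skew-symmetric part $S=\frac12(W-W^T)$. Let $B\in\mathbb{R}^{m\times n}$ with $\operatorname{rank}(B)<m\le n$, let $$A=\begin{pmatrix} W & B^T\\ -B & 0\end{pmatrix},$$ and let $b\in\mathbb{R}^{n+m}$ lie in the range of $A$. For $\omega>0$ let $P=\omega H$ and $$M=\begin{pmatrix} P & B^T\\ -B & 0\end{pmatrix}.$$ If $$\omega>\tfrac12\left(1+\rho\big(H^{-1/2}SH^{-1/2}\big)^2\right),$$ then the iteration $x^{(k+1)}=x^{(k)}+M^\dagger(b-Ax^{(k)})$, $k=0,1,2,\dots$, is convergent.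
   Context: $M^\dagger$ is the Moore–Penrose inverse of $M$; $\rho(\cdot)$ denotes the spectral radius; $H^{-1/2}$ is the inverse of the symmetric positive definite square root of $H$. The iteration is called convergent if the sequence $x^{(k)}$ converges (to a solution of $Ax=b$) for every initial guess $x^{(0)}$; equivalently, with $T=I-M^\dagger A$, the limit $\lim_{k\to\infty}T^k$ exists. *)

theory Defs
  imports "Jordan_Normal_Form.Spectral_Radius" "Jordan_Normal_Form.DL_Rank"
begin

definition pos_def_mat :: "nat \<Rightarrow> real mat \<Rightarrow> bool" where
  "pos_def_mat n W \<longleftrightarrow> W \<in> carrier_mat n n \<and>
     (\<forall>x \<in> carrier_vec n. x \<noteq> 0\<^sub>v n \<longrightarrow> x \<bullet> (W *\<^sub>v x) > 0)"

definition mp_inverse :: "real mat \<Rightarrow> real mat" where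
  "mp_inverse A = (THE X. X \<in> carrier_mat (dim_col A) (dim_row A) \<and>
     A * X * A = A \<and> X * A * X = X \<and>
     (A * X)\<^sup>T = A * X \<and> (X * A)\<^sup>T = X * A)"

definition spd_sqrt :: "real mat \<Rightarrow> real mat" where
  "spd_sqrt H = (THE R. R\<^sup>T = R \<and> pos_def_mat (dim_row H) R \<and> R * R = H)"

definition inv_mat :: "real mat \<Rightarrow> real mat" where
  "inv_mat R = (THE X. X \<in> carrier_mat (dim_row R) (dim_row R) \<and>
     R * X = 1\<^sub>m (dim_row R) \<and> X * R = 1\<^sub>m (dim_row R))"

fun iterate :: "real mat \<Rightarrow> real mat \<Rightarrow> real vec \<Rightarrow> real vec \<Rightarrow> nat \<Rightarrow> real vec" where
  "iterate A M b x0 0 = x0"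
| "iterate A M b x0 (Suc k) =
     iterate A M b x0 k + mp_inverse M *\<^sub>v (b - A *\<^sub>v iterate A M b x0 k)"

definition iteration_convergent :: "nat \<Rightarrow> real mat \<Rightarrow> real mat \<Rightarrow> real vec \<Rightarrow> bool" where
  "iteration_convergent N A M b \<longleftrightarrow>
     (\<forall>x0 \<in> carrier_vec N. \<exists>L \<in> carrier_vec N.
        \<forall>i < N. (\<lambda>k. iterate A M b x0 k $ i) \<longlonglongrightarrow> L $ i)"

end

theory Submission
  imports Defs
begin

lemma cs_real:
  fixes u v :: "real vec"
  assumes u: "u \<in> carrier_vec n" and v: "v \<in> carrier_vec n"
  shows "(u \<bullet> v)^2 \<le> (u \<bullet> u) * (v \<bullet> v)"
proof -
  define a where "a = v \<bullet> v"
  define t where "t = u \<bullet> v"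
  have sa: "a = (\<Sum>i<n. v$i * v$i)" unfolding a_def scalar_prod_def using v by (simp add: atLeast0LessThan)
  have st: "t = (\<Sum>i<n. u$i * v$i)" unfolding t_def scalar_prod_def using v by (simp add: atLeast0LessThan)
  have su: "u \<bullet> u = (\<Sum>i<n. u$i * u$i)" unfolding scalar_prod_def using u by (simp add: atLeast0LessThan)
  have a0: "a \<ge> 0" unfolding sa by (intro sum_nonneg) auto
  have "0 \<le> (\<Sum>i<n. (a * u$i - t * v$i)^2)" by (intro sum_nonneg) auto
  also have "\<dots> = a*a * (\<Sum>i<n. u$i * u$i) - 2*a*t*(\<Sum>i<n. u$i * v$i) + t*t*(\<Sum>i<n. v$i * v$i)"
    by (simp add: power2_eq_square algebra_simps sum.distrib sum_distrib_left sum_subtractf)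
  also have "\<dots> = a * (a * (u \<bullet> u) - t^2)" unfolding su st[symmetric] sa[symmetric]
    by (simp add: power2_eq_square algebra_simps)
  finally have *: "0 \<le> a * (a * (u \<bullet> u) - t^2)" .
  show ?thesis
  proof (cases "a = 0")
    case True
    have "\<forall>i<n. v$i * v$i = 0" using True unfolding sa
      using sum_nonneg_eq_0_iff[of "{..<n}" "\<lambda>i. v$i * v$i"] by auto
    hence "t = 0" unfolding st by auto
    thus ?thesis unfolding t_def[symmetric] a_def[symmetric] using True by simp
  next
    case False
    with a0 have "a > 0" by auto
    with * have "a * (u \<bullet> u) - t^2 \<ge> 0" by (simp add: zero_le_mult_iff)
    thus ?thesis unfolding t_def[symmetric] a_def[symmetric] by (simp add: algebra_simps)
  qed
qed

lemma sprod_self_nonneg: fixes v :: "real vec" shows "v \<bullet> v \<ge> 0"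
  unfolding scalar_prod_def by (intro sum_nonneg) auto

lemma sprod_self_zero: fixes v :: "real vec" assumes "v \<in> carrier_vec n" "v \<bullet> v = 0"
  shows "v = 0\<^sub>v n"
proof -
  have "\<forall>i\<in>{0..<n}. v$i * v$i = 0" using assms unfolding scalar_prod_def
    using sum_nonneg_eq_0_iff[of "{0..<n}" "\<lambda>i. v$i * v$i"] by auto
  thus ?thesis using assms(1) by (intro eq_vecI) auto
qed

lemma logconvex_seq:
  fixes s :: "nat \<Rightarrow> real"
  assumes nn: "\<And>j. s j \<ge> 0" and lc: "\<And>j. (s (Suc j))^2 \<le> s j * s (Suc (Suc j))"
  shows "s 1 ^ k * s 0 \<le> s 0 ^ k * s k"
proof -
  have step: "s j * s 1 \<le> s (Suc j) * s 0" for j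
  proof (induct j)
    case 0 thus ?case by simp
  next
    case (Suc j)
    show ?case
    proof (cases "s j = 0")
      case True
      with lc[of j] have "(s (Suc j))^2 \<le> 0" by simp
      hence "s (Suc j) = 0" by (simp add: power2_eq_square) (metis mult_le_0_iff nn order_antisym_conv)
      thus ?thesis using nn by simp
    next
      case False
      from False nn[of j] have pos: "s j > 0" by linarith
      have "s (Suc j) * s j * s 1 \<le> s (Suc j) * (s (Suc j) * s 0)"
        using Suc mult_left_mono[OF Suc nn[of "Suc j"]] by (simp add: algebra_simps)
      also have "\<dots> = (s (Suc j))^2 * s 0" by (simp add: power2_eq_square)
      also have "\<dots> \<le> s j * s (Suc (Suc j)) * s 0" by (rule mult_right_mono[OF lc nn])
      finally have "s j * (s (Suc j) * s 1) \<le> s j * (s (Suc (Suc j)) * s 0)" by (simp add: algebra_simps)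
      thus ?thesis using pos by simp
    qed
  qed
  show ?thesis
  proof (induct k)
    case 0 thus ?case by simp
  next
    case (Suc k)
    have "s 1 ^ Suc k * s 0 = s 1 * (s 1 ^ k * s 0)" by simp
    also have "\<dots> \<le> s 1 * (s 0 ^ k * s k)" by (rule mult_left_mono[OF Suc nn])
    also have "\<dots> = s 0 ^ k * (s k * s 1)" by simp
    also have "\<dots> \<le> s 0 ^ k * (s (Suc k) * s 0)" by (rule mult_left_mono[OF step], simp add: nn)
    also have "\<dots> = s 0 ^ Suc k * s (Suc k)" by simp
    finally show ?case .
  qed
qed

lemma smult_mat_mult_vec:
  fixes A :: "'a :: comm_ring_1 mat"
  assumes A: "A \<in> carrier_mat n m" and v: "v \<in> carrier_vec m"
  shows "(c \<cdot>\<^sub>m A) *\<^sub>v v = c \<cdot>\<^sub>v (A *\<^sub>v v)"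
  by (rule eq_vecI, insert A v, auto simp: scalar_prod_def sum_distrib_left ac_simps)

lemma pow_smult_mat:
  fixes A :: "'a :: comm_ring_1 mat"
  assumes A: "A \<in> carrier_mat n n"
  shows "(c \<cdot>\<^sub>m A) ^\<^sub>m k = c^k \<cdot>\<^sub>m (A ^\<^sub>m k)"
proof (induct k)
  case 0 thus ?case using A by (auto intro!: eq_matI)
next
  case (Suc k)
  have "(c \<cdot>\<^sub>m A) ^\<^sub>m Suc k = (c^k \<cdot>\<^sub>m (A ^\<^sub>m k)) * (c \<cdot>\<^sub>m A)" using Suc by simp
  also have "\<dots> = c^k \<cdot>\<^sub>m ((A ^\<^sub>m k) * (c \<cdot>\<^sub>m A))"
    by (rule mult_smult_assoc_mat, insert A, auto)
  also have "(A ^\<^sub>m k) * (c \<cdot>\<^sub>m A) = c \<cdot>\<^sub>m ((A ^\<^sub>m k) * A)"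
    by (rule mult_smult_distrib, insert A, auto)
  also have "c^k \<cdot>\<^sub>m (c \<cdot>\<^sub>m ((A ^\<^sub>m k) * A)) = (c^k * c) \<cdot>\<^sub>m ((A ^\<^sub>m k) * A)"
    by (rule eq_matI) auto
  finally show ?case by (simp add: ac_simps)
qed

lemma pow_mat_mult_vec_funpow:
  assumes G: "G \<in> carrier_mat n n" and w: "w \<in> carrier_vec n"
  shows "G ^\<^sub>m k *\<^sub>v w = ((\<lambda>v. G *\<^sub>v v) ^^ k) w \<and> ((\<lambda>v. G *\<^sub>v v) ^^ k) w \<in> carrier_vec n"
  using w
proof (induct k arbitrary: w)
  case 0 thus ?case using G by auto
next
  case (Suc k)
  have Gw: "G *\<^sub>v w \<in> carrier_vec n" using G Suc by auto
  have "G ^\<^sub>m Suc k *\<^sub>v w = (G ^\<^sub>m k * G) *\<^sub>v w" by simp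
  also have "\<dots> = G ^\<^sub>m k *\<^sub>v (G *\<^sub>v w)" by (rule assoc_mult_mat_vec, insert G Suc, auto)
  also have "\<dots> = ((\<lambda>v. G *\<^sub>v v) ^^ k) (G *\<^sub>v w)" using Suc(1)[OF Gw] by simp
  also have "\<dots> = ((\<lambda>v. G *\<^sub>v v) ^^ Suc k) w" by (simp add: funpow_Suc_right del: funpow.simps)
  finally show ?case using Suc(1)[OF Gw] by (simp add: funpow_Suc_right del: funpow.simps)
qed

lemma spectral_radius_nonneg:
  assumes A: "A \<in> carrier_mat n n" and n: "n > 0"
  shows "spectral_radius A \<ge> 0"
  using spectral_radius_mem_max(1)[OF A n] by auto

lemma spectral_radius_scale:
  fixes A :: "complex mat"
  assumes A: "A \<in> carrier_mat n n" and n: "n > 0" and r: "spectral_radius A < r"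
  shows "spectral_radius (complex_of_real (1/r) \<cdot>\<^sub>m A) < 1"
proof -
  have r0: "r > 0" using spectral_radius_nonneg[OF A n] r by auto
  let ?B = "complex_of_real (1/r) \<cdot>\<^sub>m A"
  have B: "?B \<in> carrier_mat n n" using A by auto
  from spectral_radius_mem_max(1)[OF B n] obtain e where e: "e \<in> spectrum ?B"
    and eq: "spectral_radius ?B = norm e" by auto
  from e obtain v where ev: "eigenvector ?B v e" unfolding spectrum_def eigenvalue_def by auto
  hence v: "v \<in> carrier_vec n" "v \<noteq> 0\<^sub>v n" and Bv: "?B *\<^sub>v v = e \<cdot>\<^sub>v v"
    unfolding eigenvector_def using B by auto
  have "?B *\<^sub>v v = complex_of_real (1/r) \<cdot>\<^sub>v (A *\<^sub>v v)" by (rule smult_mat_mult_vec[OF A v(1)])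
  hence "complex_of_real r \<cdot>\<^sub>v (?B *\<^sub>v v) = A *\<^sub>v v" using r0
    by (auto simp: smult_smult_assoc)
  hence "A *\<^sub>v v = (complex_of_real r * e) \<cdot>\<^sub>v v" unfolding Bv by (auto simp: smult_smult_assoc)
  hence "eigenvector A v (complex_of_real r * e)" unfolding eigenvector_def using A v by auto
  hence "complex_of_real r * e \<in> spectrum A" unfolding spectrum_def eigenvalue_def by auto
  from spectral_radius_mem_max(2)[OF A n] this
  have "norm (complex_of_real r * e) \<le> spectral_radius A" by auto
  hence "r * norm e \<le> spectral_radius A" using r0 by (simp add: norm_mult)
  with r have "r * norm e < r * 1" by linarith
  hence "norm e < 1" using r0 by (simp only: mult_less_cancel_left_pos)
  thus ?thesis unfolding eq .
qed

lemma pow_entry_bound: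
  fixes G :: "real mat"
  assumes G: "G \<in> carrier_mat n n" and n: "n > 0"
    and r: "spectral_radius (map_mat complex_of_real G) < r"
  shows "\<exists>c. \<forall>k i j. i < n \<longrightarrow> j < n \<longrightarrow> \<bar>(G ^\<^sub>m k) $$ (i,j)\<bar> \<le> c * r^k"
proof -
  let ?Gc = "map_mat complex_of_real G"
  have Gc: "?Gc \<in> carrier_mat n n" using G by auto
  have r0: "r > 0" using spectral_radius_nonneg[OF Gc n] r by auto
  let ?B = "complex_of_real (1/r) \<cdot>\<^sub>m ?Gc"
  have B: "?B \<in> carrier_mat n n" using G by auto
  from spectral_radius_jnf_norm_bound_less_1_upper_triangular[OF B spectral_radius_scale[OF Gc n r]]
  obtain c where c: "\<And>k. norm_bound (?B ^\<^sub>m k) c" by auto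
  have B': "?B = map_mat complex_of_real ((1/r) \<cdot>\<^sub>m G)" by (rule eq_matI, auto)
  show ?thesis
  proof (intro exI allI impI)
    fix k i j assume i: "i < n" and j: "j < n"
    have "?B ^\<^sub>m k = map_mat complex_of_real (((1/r) \<cdot>\<^sub>m G) ^\<^sub>m k)"
      unfolding B' by (rule of_real_hom.mat_hom_pow[symmetric], insert G, auto)
    also have "((1/r) \<cdot>\<^sub>m G) ^\<^sub>m k = (1/r)^k \<cdot>\<^sub>m (G ^\<^sub>m k)" by (rule pow_smult_mat[OF G])
    finally have "norm ((?B ^\<^sub>m k) $$ (i,j)) = \<bar>(1/r)^k * (G ^\<^sub>m k) $$ (i,j)\<bar>"
      using i j G by (simp add: norm_mult norm_power norm_divide abs_mult power_abs)
    moreover have "norm ((?B ^\<^sub>m k) $$ (i,j)) \<le> c" using c[of k] i j G unfolding norm_bound_def by auto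
    ultimately have "\<bar>(G ^\<^sub>m k) $$ (i,j)\<bar> / r^k \<le> c" using r0 by (simp add: abs_mult power_divide)
    thus "\<bar>(G ^\<^sub>m k) $$ (i,j)\<bar> \<le> c * r^k" using r0 by (simp add: divide_le_eq)
  qed
qed

lemma le_limit_sq:
  fixes x a \<rho> :: real
  assumes a: "a \<ge> 0" and rho: "\<rho> \<ge> 0" and h: "\<And>r. r > \<rho> \<Longrightarrow> x \<le> a * r^2"
  shows "x \<le> a * \<rho>^2"
proof (rule ccontr)
  assume "\<not> ?thesis"
  hence d: "x - a * \<rho>^2 > 0" by simp
  define d where "d = x - a * \<rho>^2"
  have d0: "d > 0" using d d_def by simp
  show False
  proof (cases "a = 0")
    case True
    with h[of "\<rho>+1"] d show False by simp
  next
    case False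
    with a have a0: "a > 0" by simp
    define \<delta> where "\<delta> = min 1 (d / (2*a*(2*\<rho>+1)))"
    have q: "2*a*(2*\<rho>+1) > 0" using a0 rho by simp
    have \<delta>0: "\<delta> > 0" unfolding \<delta>_def using d0 q by simp
    have \<delta>1: "\<delta> \<le> 1" unfolding \<delta>_def by simp
    have \<delta>2: "\<delta> \<le> d / (2*a*(2*\<rho>+1))" unfolding \<delta>_def by simp
    have e1: "a * (\<rho>+\<delta>)^2 = a*\<rho>^2 + a*\<delta>*(2*\<rho>+\<delta>)" by (simp add: power2_eq_square algebra_simps)
    have e2: "a*\<delta>*(2*\<rho>+\<delta>) \<le> a*\<delta>*(2*\<rho>+1)" using \<delta>1 a0 \<delta>0 by (intro mult_left_mono) auto
    have e3: "a*\<delta>*(2*\<rho>+1) \<le> a*(d / (2*a*(2*\<rho>+1)))*(2*\<rho>+1)"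
      using \<delta>2 a0 rho by (intro mult_right_mono mult_left_mono) auto
    have e4: "a*(d / (2*a*(2*\<rho>+1)))*(2*\<rho>+1) = (a*(2*\<rho>+1)) * d / ((a*(2*\<rho>+1))*2)" by (simp add: ac_simps)
    have e5: "(a*(2*\<rho>+1)) * d / ((a*(2*\<rho>+1))*2) = d/2" using a0 rho by simp
    have "a * (\<rho>+\<delta>)^2 \<le> a*\<rho>^2 + d/2" unfolding e1 using e2 e3 e4 e5 d_def by simp
    moreover have "a*\<rho>^2 + d/2 < x" using d0 unfolding d_def by (simp add: field_simps)
    ultimately have "a * (\<rho>+\<delta>)^2 < x" by (rule le_less_trans)
    with h[of "\<rho>+\<delta>"] \<delta>0 show False by simp
  qed
qed

lemma sym_skew_bound:
  fixes G :: "real mat"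
  assumes G: "G \<in> carrier_mat n n" and n: "n > 0" and sym: "G\<^sup>T = G \<or> G\<^sup>T = - G"
    and w: "w \<in> carrier_vec n"
  shows "(G *\<^sub>v w) \<bullet> (G *\<^sub>v w) \<le> (spectral_radius (map_mat complex_of_real G))^2 * (w \<bullet> w)"
proof -
  define \<rho> where "\<rho> = spectral_radius (map_mat complex_of_real G)"
  have rho0: "\<rho> \<ge> 0" unfolding \<rho>_def by (rule spectral_radius_nonneg[OF _ n], insert G, auto)
  define f where "f = (\<lambda>v. G *\<^sub>v v)"
  define z where "z j = (f ^^ j) w" for j
  have zpow: "G ^\<^sub>m j *\<^sub>v w = z j" and zc: "z j \<in> carrier_vec n" for j
    using pow_mat_mult_vec_funpow[OF G w, of j] unfolding z_def f_def by auto
  have zS: "z (Suc j) = G *\<^sub>v z j" for j by (simp add: z_def f_def)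
  define s where "s j = z j \<bullet> z j" for j
  have nn: "s j \<ge> 0" for j unfolding s_def by (rule sprod_self_nonneg)
  have lc: "(s (Suc j))^2 \<le> s j * s (Suc (Suc j))" for j
  proof -
    have Gz: "G *\<^sub>v z j \<in> carrier_vec n" using G zc by auto
    have e1: "s (Suc j) = (G\<^sup>T *\<^sub>v z (Suc j)) \<bullet> z j"
      unfolding s_def zS using transpose_vec_mult_scalar[OF G zc Gz] by simp
    have "(s (Suc j))^2 = (z (Suc (Suc j)) \<bullet> z j)^2"
    proof (cases "G\<^sup>T = G")
      case True
      thus ?thesis unfolding e1 True zS[of "Suc j"] by simp
    next
      case False
      with sym have T: "G\<^sup>T = - G" by simp
      have "(G\<^sup>T *\<^sub>v z (Suc j)) \<bullet> z j = - (z (Suc (Suc j)) \<bullet> z j)"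
        unfolding T zS[of "Suc j"] using G zc[of "Suc j"] zc[of j]
        by (subst uminus_mult_mat_vec, auto)
      thus ?thesis unfolding e1 by simp
    qed
    also have "\<dots> \<le> s (Suc (Suc j)) * s j" unfolding s_def by (rule cs_real[OF zc zc])
    finally show ?thesis by (simp add: ac_simps)
  qed
  have logc: "s 1 ^ k * s 0 \<le> s 0 ^ k * s k" for k by (rule logconvex_seq[of s, OF nn lc])
  have bnd: "\<exists>C. \<forall>k. s k \<le> C * (r^2)^k" if r: "r > \<rho>" for r
  proof -
    from pow_entry_bound[OF G n r[unfolded \<rho>_def]] obtain c where
      c: "\<And>k i j. i < n \<Longrightarrow> j < n \<Longrightarrow> \<bar>(G ^\<^sub>m k) $$ (i,j)\<bar> \<le> c * r^k" by auto
    define L where "L = (\<Sum>j<n. \<bar>w $ j\<bar>)"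
    have r0: "r > 0" using r rho0 by simp
    show ?thesis
    proof (intro exI allI)
      fix k
      have zi: "\<bar>z k $ i\<bar> \<le> c * r^k * L" if i: "i < n" for i
      proof -
        have "z k $ i = (\<Sum>j<n. (G ^\<^sub>m k) $$ (i,j) * w $ j)"
          unfolding zpow[symmetric] using i G w
          by (simp add: scalar_prod_def row_def atLeast0LessThan)
        also have "\<bar>\<dots>\<bar> \<le> (\<Sum>j<n. \<bar>(G ^\<^sub>m k) $$ (i,j) * w $ j\<bar>)" by (rule sum_abs)
        also have "\<dots> \<le> (\<Sum>j<n. c * r^k * \<bar>w $ j\<bar>)"
          by (intro sum_mono, unfold abs_mult, rule mult_right_mono, insert c i, auto)
        also have "\<dots> = c * r^k * L" unfolding L_def by (simp add: sum_distrib_left)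
        finally show ?thesis .
      qed
      have "s k = (\<Sum>i<n. (z k $ i)^2)" unfolding s_def scalar_prod_def using zc[of k]
        by (simp add: atLeast0LessThan power2_eq_square)
      also have "\<dots> \<le> (\<Sum>i<n. (c * r^k * L)^2)"
        by (intro sum_mono, rule abs_le_square_iff[THEN iffD1], insert zi, force)
      also have "\<dots> = (n * (c*L)^2) * (r^2)^k" by (simp add: power_mult_distrib power_mult[symmetric] ac_simps)
      finally show "s k \<le> (n * (c*L)^2) * (r^2)^k" .
    qed
  qed
  have main: "s 1 \<le> s 0 * r^2" if r: "r > \<rho>" for r
  proof (cases "s 0 = 0")
    case True
    hence "w = 0\<^sub>v n" using sprod_self_zero[OF w] unfolding s_def z_def by simp
    moreover have "G *\<^sub>v 0\<^sub>v n = 0\<^sub>v n" using G by (intro eq_vecI) (auto simp: scalar_prod_def)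
    ultimately have "s 1 = 0" unfolding s_def using zS[of 0] G by (simp add: z_def)
    thus ?thesis using mult_nonneg_nonneg[OF nn[of 0] zero_le_power2[of r]] by simp
  next
    case False
    with nn[of 0] have s0: "s 0 > 0" by linarith
    have r0: "r > 0" using r rho0 by simp
    from bnd[OF r] obtain C where C: "\<And>k. s k \<le> C * (r^2)^k" by auto
    define x where "x = s 1 / (s 0 * r^2)"
    have xk: "x^k \<le> C / s 0" for k
    proof -
      have pos: "s 0 ^ k * (r^2)^k > 0" using s0 r0 by simp
      have "x^k * (s 0 ^ k * (r^2)^k) * s 0 = s 1 ^ k * s 0" unfolding x_def using s0 r0
        by (simp add: power_divide power_mult_distrib)
      also have "\<dots> \<le> s 0 ^ k * s k" by (rule logc)
      also have "\<dots> \<le> s 0 ^ k * (C * (r^2)^k)" using s0 C[of k] by (intro mult_left_mono) auto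
      finally have "(x^k * s 0) * (s 0 ^ k * (r^2)^k) \<le> C * (s 0 ^ k * (r^2)^k)"
        by (simp add: ac_simps)
      hence "x^k * s 0 \<le> C" using pos by (rule mult_right_le_imp_le)
      thus ?thesis using s0 by (simp add: le_divide_eq)
    qed
    have "x \<le> 1"
    proof (rule ccontr)
      assume "\<not> x \<le> 1"
      hence "x > 1" by simp
      from real_arch_pow[OF this, of "C / s 0"] obtain k where "C / s 0 < x^k" by auto
      with xk[of k] show False by simp
    qed
    thus ?thesis unfolding x_def using s0 r0 by (simp add: divide_le_eq)
  qed
  have "s 1 \<le> s 0 * \<rho>^2" by (rule le_limit_sq[OF nn rho0 main])
  thus ?thesis unfolding s_def \<rho>_def z_def f_def by (simp add: ac_simps)
qed

abbreviation cmat :: "real mat \<Rightarrow> complex mat" where "cmat G \<equiv> map_mat complex_of_real G"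

lemma Re_mult_vec:
  fixes G :: "real mat"
  assumes G: "G \<in> carrier_mat n m" and z: "z \<in> carrier_vec m"
  shows "map_vec Re (cmat G *\<^sub>v z) = G *\<^sub>v map_vec Re z"
    "map_vec Im (cmat G *\<^sub>v z) = G *\<^sub>v map_vec Im z"
  by (rule eq_vecI, insert G z, auto simp: scalar_prod_def Re_sum Im_sum)+

lemma Re_smult_vec:
  fixes z :: "complex vec"
  shows "map_vec Re (e \<cdot>\<^sub>v z) = Re e \<cdot>\<^sub>v map_vec Re z - Im e \<cdot>\<^sub>v map_vec Im z"
    "map_vec Im (e \<cdot>\<^sub>v z) = Im e \<cdot>\<^sub>v map_vec Re z + Re e \<cdot>\<^sub>v map_vec Im z"
  by (rule eq_vecI, auto)+

lemma Re_Im_zero: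
  fixes z :: "complex vec"
  assumes z: "z \<in> carrier_vec n" and "map_vec Re z = 0\<^sub>v n" and "map_vec Im z = 0\<^sub>v n"
  shows "z = 0\<^sub>v n"
proof (rule eq_vecI)
  fix i assume "i < dim_vec (0\<^sub>v n :: complex vec)"
  hence i: "i < n" by simp
  from assms(2) have "Re (z $ i) = 0" using i z by (metis index_map_vec(1) index_zero_vec(1) carrier_vecD)
  moreover from assms(3) have "Im (z $ i) = 0" using i z by (metis index_map_vec(1) index_zero_vec(1) carrier_vecD)
  ultimately show "z $ i = 0\<^sub>v n $ i" using i by (simp add: complex_eq_iff)
qed (insert z, auto)

lemma sym_real_eigen:
  fixes G :: "real mat"
  assumes G: "G \<in> carrier_mat n n" and n: "n > 0" and sym: "G\<^sup>T = G"
  shows "\<exists>v t. v \<in> carrier_vec n \<and> v \<noteq> 0\<^sub>v n \<and> G *\<^sub>v v = t \<cdot>\<^sub>v v \<and> \<bar>t\<bar> = spectral_radius (cmat G)"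
proof -
  have Gc: "cmat G \<in> carrier_mat n n" using G by auto
  from spectral_radius_mem_max(1)[OF Gc n] obtain e where e: "e \<in> spectrum (cmat G)"
    and eq: "spectral_radius (cmat G) = norm e" by auto
  from e obtain z where ev: "eigenvector (cmat G) z e" unfolding spectrum_def eigenvalue_def by auto
  hence z: "z \<in> carrier_vec n" "z \<noteq> 0\<^sub>v n" and Gz: "cmat G *\<^sub>v z = e \<cdot>\<^sub>v z"
    unfolding eigenvector_def using Gc by auto
  define p where "p = map_vec Re z"
  define q where "q = map_vec Im z"
  have p: "p \<in> carrier_vec n" and q: "q \<in> carrier_vec n" unfolding p_def q_def using z by auto
  have Gp: "G *\<^sub>v p = Re e \<cdot>\<^sub>v p - Im e \<cdot>\<^sub>v q"
    using arg_cong[OF Gz, of "map_vec Re"] unfolding Re_mult_vec[OF G z(1)] Re_smult_vec p_def q_def .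
  have Gq: "G *\<^sub>v q = Im e \<cdot>\<^sub>v p + Re e \<cdot>\<^sub>v q"
    using arg_cong[OF Gz, of "map_vec Im"] unfolding Re_mult_vec[OF G z(1)] Re_smult_vec p_def q_def .
  have "(G\<^sup>T *\<^sub>v q) \<bullet> p = q \<bullet> (G *\<^sub>v p)" by (rule transpose_vec_mult_scalar[OF G p q])
  hence "(G *\<^sub>v q) \<bullet> p = q \<bullet> (G *\<^sub>v p)" unfolding sym .
  hence "Im e * (p \<bullet> p) + Re e * (q \<bullet> p) = Re e * (q \<bullet> p) - Im e * (q \<bullet> q)"
    unfolding Gp Gq using p q
    by (simp add: add_scalar_prod_distrib scalar_prod_minus_distrib comm_scalar_prod[of q n p])
  hence "Im e * (p \<bullet> p + q \<bullet> q) = 0" by (simp add: algebra_simps)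
  moreover have "p \<bullet> p + q \<bullet> q > 0"
  proof -
    have "p \<noteq> 0\<^sub>v n \<or> q \<noteq> 0\<^sub>v n" using Re_Im_zero[OF z(1)] z(2) unfolding p_def q_def by blast
    hence "p \<bullet> p \<noteq> 0 \<or> q \<bullet> q \<noteq> 0" using sprod_self_zero[OF p] sprod_self_zero[OF q] by blast
    thus ?thesis using sprod_self_nonneg[of p] sprod_self_nonneg[of q] by linarith
  qed
  ultimately have Ie: "Im e = 0" by simp
  hence Gp': "G *\<^sub>v p = Re e \<cdot>\<^sub>v p" and Gq': "G *\<^sub>v q = Re e \<cdot>\<^sub>v q" using Gp Gq p q by auto
  have ne: "norm e = \<bar>Re e\<bar>" using Ie by (simp add: cmod_def)
  show ?thesis
  proof (cases "p = 0\<^sub>v n")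
    case False
    thus ?thesis using p Gp' eq ne by auto
  next
    case True
    hence "q \<noteq> 0\<^sub>v n" using Re_Im_zero[OF z(1)] z(2) unfolding p_def q_def by blast
    thus ?thesis using q Gq' eq ne by auto
  qed
qed

definition dmat :: "nat \<Rightarrow> (nat \<Rightarrow> real) \<Rightarrow> real mat" where
  "dmat n f = mat n n (\<lambda>(i,j). if i = j then f i else 0)"

lemma dmat_carrier[simp]: "dmat n f \<in> carrier_mat n n" unfolding dmat_def by auto

lemma dmat_transpose[simp]: "(dmat n f)\<^sup>T = dmat n f" unfolding dmat_def by (rule eq_matI) auto

lemma mult_dmat_right:
  assumes A: "A \<in> carrier_mat m n"
  shows "A * dmat n d = mat m n (\<lambda>(a,j). A $$ (a,j) * d j)"
proof (rule eq_matI)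
  fix a j assume a: "a < dim_row (mat m n (\<lambda>(a,j). A $$ (a,j) * d j))"
    and j: "j < dim_col (mat m n (\<lambda>(a,j). A $$ (a,j) * d j))"
  hence a: "a < m" and j: "j < n" by auto
  have "(A * dmat n d) $$ (a,j) = (\<Sum>l\<in>{0..<n}. A $$ (a,l) * (if l = j then d l else 0))"
    using A a j by (simp add: scalar_prod_def dmat_def)
  also have "\<dots> = (\<Sum>l\<in>{0..<n}. if l = j then A $$ (a,j) * d j else 0)"
    by (rule sum.cong) auto
  also have "\<dots> = A $$ (a,j) * d j" using j by simp
  finally show "(A * dmat n d) $$ (a,j) = mat m n (\<lambda>(a,j). A $$ (a,j) * d j) $$ (a,j)" using a j by simp
qed (insert A, auto simp: dmat_def)

lemma mult_dmat_left:
  assumes A: "A \<in> carrier_mat n m"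
  shows "dmat n d * A = mat n m (\<lambda>(a,j). d a * A $$ (a,j))"
proof (rule eq_matI)
  fix a j assume a: "a < dim_row (mat n m (\<lambda>(a,j). d a * A $$ (a,j)))"
    and j: "j < dim_col (mat n m (\<lambda>(a,j). d a * A $$ (a,j)))"
  hence a: "a < n" and j: "j < m" by auto
  have "(dmat n d * A) $$ (a,j) = (\<Sum>l\<in>{0..<n}. (if a = l then d a else 0) * A $$ (l,j))"
    using A a j by (simp add: scalar_prod_def dmat_def)
  also have "\<dots> = (\<Sum>l\<in>{0..<n}. if l = a then d a * A $$ (a,j) else 0)"
    by (rule sum.cong) auto
  also have "\<dots> = d a * A $$ (a,j)" using a by simp
  finally show "(dmat n d * A) $$ (a,j) = mat n m (\<lambda>(a,j). d a * A $$ (a,j)) $$ (a,j)" using a j by simp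
qed (insert A, auto simp: dmat_def)

lemma dmat_mult: "dmat n f * dmat n g = dmat n (\<lambda>i. f i * g i)"
  unfolding mult_dmat_right[OF dmat_carrier] by (rule eq_matI) (auto simp: dmat_def)

definition orthonormal_list :: "nat \<Rightarrow> real vec list \<Rightarrow> bool" where
  "orthonormal_list n ws \<longleftrightarrow> set ws \<subseteq> carrier_vec n \<and>
     (\<forall>i<length ws. \<forall>j<length ws. ws!i \<bullet> ws!j = (if i = j then 1 else 0))"

lemma orthonormal_UtU:
  assumes o: "orthonormal_list n ws"
  shows "(mat_of_cols n ws)\<^sup>T * mat_of_cols n ws = 1\<^sub>m (length ws)"
proof (rule eq_matI)
  fix i j assume "i < dim_row (1\<^sub>m (length ws) :: real mat)" "j < dim_col (1\<^sub>m (length ws) :: real mat)"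
  hence i: "i < length ws" and j: "j < length ws" by auto
  have c: "set ws \<subseteq> carrier_vec n" using o unfolding orthonormal_list_def by auto
  have ci: "ws!i \<in> carrier_vec n" "ws!j \<in> carrier_vec n" using c i j nth_mem by blast+
  have "((mat_of_cols n ws)\<^sup>T * mat_of_cols n ws) $$ (i,j) = ws!i \<bullet> ws!j"
    using i j c ci by (simp add: col_mat_of_cols)
  thus "((mat_of_cols n ws)\<^sup>T * mat_of_cols n ws) $$ (i,j) = 1\<^sub>m (length ws) $$ (i,j)"
    using o i j unfolding orthonormal_list_def by auto
qed auto

definition orth_to :: "real vec list \<Rightarrow> real vec \<Rightarrow> bool" where
  "orth_to ws w \<longleftrightarrow> (\<forall>i<length ws. ws!i \<bullet> w = 0)"

lemma exists_orth_vec: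
  assumes o: "orthonormal_list n ws" and k: "length ws < n"
  shows "\<exists>w \<in> carrier_vec n. w \<noteq> 0\<^sub>v n \<and> orth_to ws w"
proof (rule ccontr)
  assume contra: "\<not> ?thesis"
  define k where "k = length ws"
  define U where "U = mat_of_cols n ws"
  have c: "set ws \<subseteq> carrier_vec n" using o unfolding orthonormal_list_def by auto
  have U: "U \<in> carrier_mat n k" unfolding U_def k_def by simp
  have UtU: "U\<^sup>T * U = 1\<^sub>m k" using orthonormal_UtU[OF o] unfolding U_def k_def .
  define P where "P = 1\<^sub>m n - U * U\<^sup>T"
  have P: "P \<in> carrier_mat n n" unfolding P_def using U by auto
  have UtP: "U\<^sup>T * P = 0\<^sub>m k n"
  proof -
    have "U\<^sup>T * P = U\<^sup>T * 1\<^sub>m n - U\<^sup>T * (U * U\<^sup>T)" unfolding P_def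
      by (rule mult_minus_distrib_mat, insert U, auto)
    also have "U\<^sup>T * (U * U\<^sup>T) = (U\<^sup>T * U) * U\<^sup>T" by (rule assoc_mult_mat[symmetric], insert U, auto)
    also have "\<dots> = U\<^sup>T" unfolding UtU using U by simp
    finally show ?thesis using U by simp
  qed
  have P0: "P = 0\<^sub>m n n"
  proof (rule eq_matI)
    fix a j assume "a < dim_row (0\<^sub>m n n :: real mat)" "j < dim_col (0\<^sub>m n n :: real mat)"
    hence a: "a < n" and j: "j < n" by auto
    have cP: "col P j \<in> carrier_vec n" using P by auto
    have "orth_to ws (col P j)" unfolding orth_to_def
    proof (intro allI impI)
      fix i assume i: "i < length ws"
      have ci: "ws!i \<in> carrier_vec n" using c i nth_mem by blast
      have "(U\<^sup>T * P) $$ (i,j) = ws!i \<bullet> col P j" using i j U P c ci unfolding U_def k_def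
        by (simp add: col_mat_of_cols)
      thus "ws!i \<bullet> col P j = 0" unfolding UtP using i j unfolding k_def by simp
    qed
    with contra cP have "col P j = 0\<^sub>v n" by blast
    hence "col P j $ a = 0" using a by simp
    thus "P $$ (a,j) = 0\<^sub>m n n $$ (a,j)" using a j P by simp
  qed (insert P, auto)
  have UUt: "U * U\<^sup>T = 1\<^sub>m n"
  proof (rule eq_matI)
    fix a b assume "a < dim_row (1\<^sub>m n :: real mat)" "b < dim_col (1\<^sub>m n :: real mat)"
    hence a: "a < n" and b: "b < n" by auto
    have "P $$ (a,b) = 0" using P0 a b by simp
    thus "(U * U\<^sup>T) $$ (a,b) = 1\<^sub>m n $$ (a,b)" unfolding P_def using a b U by simp
  qed (insert U, auto)
  have "real n = (\<Sum>a<n. (U * U\<^sup>T) $$ (a,a))" unfolding UUt by simp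
  also have "\<dots> = (\<Sum>a<n. \<Sum>i<k. U $$ (a,i) * U $$ (a,i))"
    using U by (intro sum.cong refl) (simp add: scalar_prod_def atLeast0LessThan)
  also have "\<dots> = (\<Sum>i<k. \<Sum>a<n. U $$ (a,i) * U $$ (a,i))" by (rule sum.swap)
  also have "\<dots> = (\<Sum>i<k. (U\<^sup>T * U) $$ (i,i))"
    using U by (intro sum.cong refl) (simp add: scalar_prod_def atLeast0LessThan)
  also have "\<dots> = real k" unfolding UtU by simp
  finally show False using k unfolding k_def by simp
qed

lemma mult_zero_vec_right: "A \<in> carrier_mat n m \<Longrightarrow> A *\<^sub>v 0\<^sub>v m = 0\<^sub>v n"
  by (intro eq_vecI) (auto simp: scalar_prod_def)

lemma eigvec_compl:
  fixes H :: "real mat"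
  assumes H: "H \<in> carrier_mat n n" and sym: "H\<^sup>T = H" and o: "orthonormal_list n ws"
    and k: "length ws < n" and inv: "\<And>i. i < length ws \<Longrightarrow> H *\<^sub>v ws!i = ls!i \<cdot>\<^sub>v ws!i"
  shows "\<exists>v t. v \<in> carrier_vec n \<and> v \<noteq> 0\<^sub>v n \<and> orth_to ws v \<and> H *\<^sub>v v = t \<cdot>\<^sub>v v"
proof -
  have n: "n > 0" using k by simp
  define k where "k = length ws"
  define U where "U = mat_of_cols n ws"
  have c: "set ws \<subseteq> carrier_vec n" using o unfolding orthonormal_list_def by auto
  have cw: "i < k \<Longrightarrow> ws!i \<in> carrier_vec n" for i using c nth_mem unfolding k_def by blast
  have U: "U \<in> carrier_mat n k" unfolding U_def k_def by simp
  have UtU: "U\<^sup>T * U = 1\<^sub>m k" using orthonormal_UtU[OF o] unfolding U_def k_def .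
  define P where "P = 1\<^sub>m n - U * U\<^sup>T"
  have P: "P \<in> carrier_mat n n" unfolding P_def using U by auto
  have Pt: "P\<^sup>T = P" unfolding P_def using U
    by (subst transpose_minus, auto simp: transpose_mult[OF U, of _ n])
  have UtP: "U\<^sup>T * P = 0\<^sub>m k n"
  proof -
    have "U\<^sup>T * P = U\<^sup>T * 1\<^sub>m n - U\<^sup>T * (U * U\<^sup>T)" unfolding P_def
      by (rule mult_minus_distrib_mat, insert U, auto)
    also have "U\<^sup>T * (U * U\<^sup>T) = (U\<^sup>T * U) * U\<^sup>T" by (rule assoc_mult_mat[symmetric], insert U, auto)
    also have "\<dots> = U\<^sup>T" unfolding UtU using U by simp
    finally show ?thesis using U by simp
  qed
  have Ut_idx: "(U\<^sup>T *\<^sub>v y) $ i = ws!i \<bullet> y" if "i < k" for i y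
    using that U cw[OF that] unfolding U_def k_def by (simp add: col_mat_of_cols)
  have orthP: "orth_to ws (P *\<^sub>v x)" if x: "x \<in> carrier_vec n" for x
    unfolding orth_to_def
  proof (intro allI impI)
    fix i assume i: "i < length ws"
    have "ws!i \<bullet> (P *\<^sub>v x) = (U\<^sup>T *\<^sub>v (P *\<^sub>v x)) $ i" using Ut_idx i unfolding k_def by simp
    also have "U\<^sup>T *\<^sub>v (P *\<^sub>v x) = (U\<^sup>T * P) *\<^sub>v x" by (rule assoc_mult_mat_vec[symmetric], insert U P x, auto)
    also have "\<dots> = 0\<^sub>v k" unfolding UtP using x by (intro eq_vecI) (auto simp: scalar_prod_def)
    finally show "ws!i \<bullet> (P *\<^sub>v x) = 0" using i unfolding k_def by simp
  qed
  have Pfix: "P *\<^sub>v w = w" if w: "w \<in> carrier_vec n" and ow: "orth_to ws w" for w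
  proof -
    have Utw: "U\<^sup>T *\<^sub>v w = 0\<^sub>v k"
      by (rule eq_vecI, insert Ut_idx ow U w, auto simp: orth_to_def k_def)
    have "P *\<^sub>v w = 1\<^sub>m n *\<^sub>v w - (U * U\<^sup>T) *\<^sub>v w" unfolding P_def
      by (rule minus_mult_distrib_mat_vec, insert U w, auto)
    also have "(U * U\<^sup>T) *\<^sub>v w = U *\<^sub>v (U\<^sup>T *\<^sub>v w)" by (rule assoc_mult_mat_vec, insert U w, auto)
    also have "\<dots> = 0\<^sub>v n" unfolding Utw by (rule mult_zero_vec_right[OF U])
    finally show ?thesis using w by simp
  qed
  have Hinv: "orth_to ws (H *\<^sub>v w)" if w: "w \<in> carrier_vec n" and ow: "orth_to ws w" for w
    unfolding orth_to_def
  proof (intro allI impI)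
    fix i assume i: "i < length ws"
    have "ws!i \<bullet> (H *\<^sub>v w) = (H\<^sup>T *\<^sub>v ws!i) \<bullet> w"
      by (rule transpose_vec_mult_scalar[OF H w cw, symmetric], insert i, simp add: k_def)
    also have "\<dots> = ls!i * (ws!i \<bullet> w)" unfolding sym inv[OF i] using cw[of i] i w k_def by simp
    finally show "ws!i \<bullet> (H *\<^sub>v w) = 0" using ow i unfolding orth_to_def by simp
  qed
  define G where "G = P * H * P"
  have G: "G \<in> carrier_mat n n" unfolding G_def using P H by auto
  have Gt: "G\<^sup>T = G" unfolding G_def
    by (subst transpose_mult[of _ n n _ n], insert P H, auto simp: transpose_mult[OF P H] Pt sym)
  have Gv: "G *\<^sub>v x = P *\<^sub>v (H *\<^sub>v (P *\<^sub>v x))" if x: "x \<in> carrier_vec n" for x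
    unfolding G_def using P H x by (simp add: assoc_mult_mat_vec[of _ n n _ n])
  have GH: "G *\<^sub>v w = H *\<^sub>v w" if w: "w \<in> carrier_vec n" and ow: "orth_to ws w" for w
    unfolding Gv[OF w] Pfix[OF w ow] using Pfix[OF _ Hinv[OF w ow]] H w by simp
  from sym_real_eigen[OF G n Gt] obtain v t where v: "v \<in> carrier_vec n" "v \<noteq> 0\<^sub>v n"
    and Gvt: "G *\<^sub>v v = t \<cdot>\<^sub>v v" and tr: "\<bar>t\<bar> = spectral_radius (cmat G)" by auto
  show ?thesis
  proof (cases "t = 0")
    case False
    have vv: "v = (1/t) \<cdot>\<^sub>v (G *\<^sub>v v)" unfolding Gvt using False by (auto simp: smult_smult_assoc)
    have "orth_to ws v" unfolding orth_to_def
    proof (intro allI impI)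
      fix i assume i: "i < length ws"
      have "ws!i \<bullet> v = (1/t) * (ws!i \<bullet> (P *\<^sub>v (H *\<^sub>v (P *\<^sub>v v))))"
        by (subst vv, unfold Gv[OF v(1)], rule scalar_prod_smult_right, insert P cw[of i] i, simp add: k_def)
      also have "ws!i \<bullet> (P *\<^sub>v (H *\<^sub>v (P *\<^sub>v v))) = 0"
        using orthP[of "H *\<^sub>v (P *\<^sub>v v)"] P H v i unfolding orth_to_def by auto
      finally show "ws!i \<bullet> v = 0" by simp
    qed
    moreover have "H *\<^sub>v v = t \<cdot>\<^sub>v v" using GH[OF v(1)] Gvt calculation by simp
    ultimately show ?thesis using v by blast
  next
    case True
    from exists_orth_vec[OF o k] obtain w where w: "w \<in> carrier_vec n" "w \<noteq> 0\<^sub>v n"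
      and ow: "orth_to ws w" by auto
    have "(G *\<^sub>v w) \<bullet> (G *\<^sub>v w) \<le> (spectral_radius (cmat G))^2 * (w \<bullet> w)"
      by (rule sym_skew_bound[OF G n _ w(1)], insert Gt, simp)
    also have "\<dots> = 0" using tr True by simp
    moreover have "G *\<^sub>v w \<in> carrier_vec n" using G w by auto
    ultimately have "G *\<^sub>v w = 0\<^sub>v n" using sprod_self_nonneg[of "G *\<^sub>v w"] sprod_self_zero[of "G *\<^sub>v w" n]
      by auto
    hence "H *\<^sub>v w = 0 \<cdot>\<^sub>v w" using GH[OF w(1) ow] w by (auto intro!: eq_vecI)
    thus ?thesis using w ow by blast
  qed
qed

lemma onb_extend:
  fixes H :: "real mat"
  assumes H: "H \<in> carrier_mat n n" and sym: "H\<^sup>T = H" and o: "orthonormal_list n ws"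
    and k: "length ws < n" and len: "length ls = length ws"
    and inv: "\<And>i. i < length ws \<Longrightarrow> H *\<^sub>v ws!i = ls!i \<cdot>\<^sub>v ws!i"
  shows "\<exists>v t. orthonormal_list n (ws @ [v]) \<and> (\<forall>i < length (ws@[v]). H *\<^sub>v (ws@[v])!i = (ls@[t])!i \<cdot>\<^sub>v (ws@[v])!i)"
proof -
  from eigvec_compl[OF H sym o k inv] obtain v t where v: "v \<in> carrier_vec n" "v \<noteq> 0\<^sub>v n"
    and ov: "orth_to ws v" and Hv: "H *\<^sub>v v = t \<cdot>\<^sub>v v" by blast
  define a where "a = v \<bullet> v"
  have a: "a > 0" unfolding a_def using sprod_self_nonneg[of v] sprod_self_zero[OF v(1)] v(2)
    by (metis order_le_less)
  define u where "u = (1 / sqrt a) \<cdot>\<^sub>v v"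
  have u: "u \<in> carrier_vec n" unfolding u_def using v by simp
  have uu: "u \<bullet> u = 1" unfolding u_def using v a by (simp add: a_def[symmetric])
  have c: "set ws \<subseteq> carrier_vec n" using o unfolding orthonormal_list_def by auto
  have cw: "i < length ws \<Longrightarrow> ws!i \<in> carrier_vec n" for i using c nth_mem by blast
  have ou: "orth_to ws u" unfolding u_def orth_to_def using ov v cw
    by (auto simp: orth_to_def scalar_prod_smult_right carrier_vecD)
  have Hu: "H *\<^sub>v u = t \<cdot>\<^sub>v u" unfolding u_def using H v Hv
    by (simp add: mult_mat_vec smult_smult_assoc mult.commute)
  show ?thesis
  proof (intro exI conjI)
    show "orthonormal_list n (ws @ [u])" unfolding orthonormal_list_def
    proof (intro conjI allI impI)
      show "set (ws @ [u]) \<subseteq> carrier_vec n" using c u by auto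
      fix i j assume i: "i < length (ws @ [u])" and j: "j < length (ws @ [u])"
      show "(ws @ [u]) ! i \<bullet> (ws @ [u]) ! j = (if i = j then 1 else 0)"
      proof (cases "i < length ws")
        case True note i' = this
        show ?thesis
        proof (cases "j < length ws")
          case True
          thus ?thesis using i' o unfolding orthonormal_list_def by (simp add: nth_append)
        next
          case False
          with j have "j = length ws" by simp
          thus ?thesis using i' ou unfolding orth_to_def by (simp add: nth_append)
        qed
      next
        case False
        with i have i': "i = length ws" by simp
        show ?thesis
        proof (cases "j < length ws")
          case True
          thus ?thesis using i' ou u cw[OF True] unfolding orth_to_def
            by (simp add: nth_append comm_scalar_prod[of u n])
        next
          case False
          with j have "j = length ws" by simp
          thus ?thesis using i' uu by (simp add: nth_append)
        qed
      qed
    qed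
    show "\<forall>i<length (ws @ [u]). H *\<^sub>v (ws @ [u]) ! i = (ls @ [t]) ! i \<cdot>\<^sub>v (ws @ [u]) ! i"
    proof (intro allI impI)
      fix i assume i: "i < length (ws @ [u])"
      show "H *\<^sub>v (ws @ [u]) ! i = (ls @ [t]) ! i \<cdot>\<^sub>v (ws @ [u]) ! i"
      proof (cases "i < length ws")
        case True thus ?thesis using inv[OF True] len by (simp add: nth_append)
      next
        case False with i have "i = length ws" by simp
        thus ?thesis using Hu len by (simp add: nth_append)
      qed
    qed
  qed
qed

lemma dmat_dims[simp]: "dim_row (dmat n f) = n" "dim_col (dmat n f) = n" unfolding dmat_def by auto

lemma onb_exists:
  fixes H :: "real mat"
  assumes H: "H \<in> carrier_mat n n" and sym: "H\<^sup>T = H"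
  shows "k \<le> n \<Longrightarrow> \<exists>ws ls. orthonormal_list n ws \<and> length ws = k \<and> length ls = k \<and>
    (\<forall>i<k. H *\<^sub>v ws!i = ls!i \<cdot>\<^sub>v ws!i)"
proof (induct k)
  case 0
  show ?case by (rule exI[of _ "[]"], rule exI[of _ "[]"], auto simp: orthonormal_list_def)
next
  case (Suc k)
  then obtain ws ls where o: "orthonormal_list n ws" and l: "length ws = k" "length ls = k"
    and inv: "\<forall>i<k. H *\<^sub>v ws!i = ls!i \<cdot>\<^sub>v ws!i" by auto
  have kk: "length ws < n" using Suc(2) l by simp
  have ll: "length ls = length ws" using l by simp
  have inv': "\<And>i. i < length ws \<Longrightarrow> H *\<^sub>v ws!i = ls!i \<cdot>\<^sub>v ws!i" using inv l by simp
  from onb_extend[OF H sym o kk ll inv'] obtain v t where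
    "orthonormal_list n (ws @ [v])" "\<forall>i < length (ws@[v]). H *\<^sub>v (ws@[v])!i = (ls@[t])!i \<cdot>\<^sub>v (ws@[v])!i"
    by auto
  thus ?case using l by (intro exI[of _ "ws@[v]"] exI[of _ "ls@[t]"]) auto
qed

theorem spectral_sym:
  fixes H :: "real mat"
  assumes H: "H \<in> carrier_mat n n" and sym: "H\<^sup>T = H"
  shows "\<exists>U d. U \<in> carrier_mat n n \<and> U\<^sup>T * U = 1\<^sub>m n \<and> U * U\<^sup>T = 1\<^sub>m n \<and>
    H = U * dmat n d * U\<^sup>T \<and> (\<forall>j<n. H *\<^sub>v col U j = d j \<cdot>\<^sub>v col U j)"
proof -
  from onb_exists[OF H sym le_refl] obtain ws ls where o: "orthonormal_list n ws"
    and l: "length ws = n" "length ls = n" and inv: "\<forall>i<n. H *\<^sub>v ws!i = ls!i \<cdot>\<^sub>v ws!i" by auto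
  define U where "U = mat_of_cols n ws"
  define d where "d j = ls!j" for j
  have c: "set ws \<subseteq> carrier_vec n" using o unfolding orthonormal_list_def by auto
  have cw: "i < n \<Longrightarrow> ws!i \<in> carrier_vec n" for i using c nth_mem l by blast
  have U: "U \<in> carrier_mat n n" unfolding U_def using mat_of_cols_carrier(1)[of n ws] unfolding l .
  have UtU: "U\<^sup>T * U = 1\<^sub>m n" using orthonormal_UtU[OF o] unfolding U_def l .
  have UUt: "U * U\<^sup>T = 1\<^sub>m n" using mat_mult_left_right_inverse[OF _ U UtU] U by simp
  have colU: "j < n \<Longrightarrow> col U j = ws!j" for j unfolding U_def using cw l by simp
  have HU: "H * U = U * dmat n d"
  proof (rule eq_matI)
    fix a j assume "a < dim_row (U * dmat n d)" "j < dim_col (U * dmat n d)"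
    hence a: "a < n" and j: "j < n" using U by auto
    have e: "(ws!j) $ a = U $$ (a,j)" using colU[OF j] a j U by (metis index_col carrier_matD(1) carrier_matD(2))
    have "(H * U) $$ (a,j) = (H *\<^sub>v col U j) $ a" using H U a j by simp
    also have "\<dots> = d j * (ws!j) $ a" unfolding colU[OF j] inv[rule_format, OF j] d_def
      using cw[OF j] a by simp
    also have "\<dots> = d j * U $$ (a,j)" using e by simp
    also have "\<dots> = (U * dmat n d) $$ (a,j)" unfolding mult_dmat_right[OF U] using a j by simp
    finally show "(H * U) $$ (a,j) = (U * dmat n d) $$ (a,j)" .
  qed (insert H U, auto)
  have "H = H * (U * U\<^sup>T)" unfolding UUt using H by simp
  also have "\<dots> = (H * U) * U\<^sup>T" using H U by (intro assoc_mult_mat[symmetric]) auto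
  also have "\<dots> = U * dmat n d * U\<^sup>T" unfolding HU ..
  finally have Hd: "H = U * dmat n d * U\<^sup>T" .
  show ?thesis using U UtU UUt Hd inv colU d_def by (intro exI[of _ U] exI[of _ d]) auto
qed

lemma mult_dmat_vec:
  assumes y: "y \<in> carrier_vec n"
  shows "dmat n f *\<^sub>v y = vec n (\<lambda>j. f j * y $ j)"
proof (rule eq_vecI)
  fix j assume "j < dim_vec (vec n (\<lambda>j. f j * y $ j))"
  hence j: "j < n" by simp
  have "(dmat n f *\<^sub>v y) $ j = (\<Sum>l\<in>{0..<n}. (if j = l then f j else 0) * y $ l)"
    using j y by (simp add: scalar_prod_def dmat_def row_def)
  also have "\<dots> = (\<Sum>l\<in>{0..<n}. if l = j then f j * y $ j else 0)" by (rule sum.cong) auto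
  also have "\<dots> = f j * y $ j" using j by simp
  finally show "(dmat n f *\<^sub>v y) $ j = vec n (\<lambda>j. f j * y $ j) $ j" using j by simp
qed (insert y, auto simp: dmat_def)

lemma conj_mult:
  assumes U: "U \<in> carrier_mat n n" and UtU: "U\<^sup>T * U = 1\<^sub>m n"
  shows "(U * dmat n f * U\<^sup>T) * (U * dmat n g * U\<^sup>T) = U * dmat n (\<lambda>i. f i * g i) * U\<^sup>T"
proof -
  have Df: "dmat n f \<in> carrier_mat n n" and Dg: "dmat n g \<in> carrier_mat n n" by auto
  have Ut: "U\<^sup>T \<in> carrier_mat n n" using U by auto
  have UDf: "U * dmat n f \<in> carrier_mat n n" using U by auto
  have UDg: "U * dmat n g \<in> carrier_mat n n" using U by auto
  have C: "U * dmat n g * U\<^sup>T \<in> carrier_mat n n" using U by auto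
  have e1: "(U * dmat n f * U\<^sup>T) * (U * dmat n g * U\<^sup>T) = (U * dmat n f) * (U\<^sup>T * (U * dmat n g * U\<^sup>T))"
    by (rule assoc_mult_mat[OF UDf Ut C])
  have e2: "U\<^sup>T * (U * dmat n g * U\<^sup>T) = (U\<^sup>T * (U * dmat n g)) * U\<^sup>T"
    by (rule assoc_mult_mat[OF Ut UDg Ut, symmetric])
  have e3: "U\<^sup>T * (U * dmat n g) = (U\<^sup>T * U) * dmat n g"
    by (rule assoc_mult_mat[OF Ut U Dg, symmetric])
  have e4: "(U\<^sup>T * U) * dmat n g = dmat n g" unfolding UtU by simp
  have e5: "(U * dmat n f) * (dmat n g * U\<^sup>T) = (U * dmat n f * dmat n g) * U\<^sup>T"
    by (rule assoc_mult_mat[OF UDf Dg Ut, symmetric])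
  have e6: "U * dmat n f * dmat n g = U * (dmat n f * dmat n g)"
    by (rule assoc_mult_mat[OF U Df Dg])
  show ?thesis unfolding e1 e2 e3 e4 e5 e6 dmat_mult ..
qed

lemma conj_transpose:
  assumes U: "U \<in> carrier_mat n n"
  shows "(U * dmat n f * U\<^sup>T)\<^sup>T = U * dmat n f * U\<^sup>T"
proof -
  have Df: "dmat n f \<in> carrier_mat n n" by auto
  have Ut: "U\<^sup>T \<in> carrier_mat n n" using U by auto
  have UDf: "U * dmat n f \<in> carrier_mat n n" using U by auto
  have "(U * dmat n f * U\<^sup>T)\<^sup>T = (U\<^sup>T)\<^sup>T * (U * dmat n f)\<^sup>T"
    by (rule transpose_mult[OF UDf Ut])
  also have "(U * dmat n f)\<^sup>T = (dmat n f)\<^sup>T * U\<^sup>T" by (rule transpose_mult[OF U Df])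
  also have "(U\<^sup>T)\<^sup>T * ((dmat n f)\<^sup>T * U\<^sup>T) = U * dmat n f * U\<^sup>T"
    unfolding transpose_transpose dmat_transpose by (rule assoc_mult_mat[OF U Df Ut, symmetric])
  finally show ?thesis .
qed

lemma conj_qf:
  assumes U: "U \<in> carrier_mat n n" and x: "x \<in> carrier_vec n"
  shows "x \<bullet> ((U * dmat n f * U\<^sup>T) *\<^sub>v x) = (\<Sum>j<n. f j * ((U\<^sup>T *\<^sub>v x) $ j)^2)"
proof -
  define y where "y = U\<^sup>T *\<^sub>v x"
  have y: "y \<in> carrier_vec n" unfolding y_def using U x by auto
  have z: "dmat n f *\<^sub>v y \<in> carrier_vec n" using y by (simp add: mult_dmat_vec)
  have "(U * dmat n f * U\<^sup>T) *\<^sub>v x = (U * dmat n f) *\<^sub>v y" unfolding y_def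
    using U x by (intro assoc_mult_mat_vec) auto
  also have "\<dots> = U *\<^sub>v (dmat n f *\<^sub>v y)" using U y by (intro assoc_mult_mat_vec) auto
  finally have "x \<bullet> ((U * dmat n f * U\<^sup>T) *\<^sub>v x) = x \<bullet> (U *\<^sub>v (dmat n f *\<^sub>v y))" by simp
  also have "\<dots> = y \<bullet> (dmat n f *\<^sub>v y)"
    using transpose_vec_mult_scalar[OF U z x] by (simp add: y_def)
  also have "\<dots> = (\<Sum>j<n. f j * (y $ j)^2)" unfolding mult_dmat_vec[OF y] using y
    by (simp add: scalar_prod_def atLeast0LessThan power2_eq_square ac_simps)
  finally show ?thesis unfolding y_def .
qed

lemma conj_pos_def:
  assumes U: "U \<in> carrier_mat n n" and UUt: "U * U\<^sup>T = 1\<^sub>m n" and f: "\<And>j. j < n \<Longrightarrow> f j > 0"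
  shows "pos_def_mat n (U * dmat n f * U\<^sup>T)"
  unfolding pos_def_mat_def
proof (intro conjI ballI impI)
  show "U * dmat n f * U\<^sup>T \<in> carrier_mat n n" using U by auto
  fix x :: "real vec" assume x: "x \<in> carrier_vec n" and x0: "x \<noteq> 0\<^sub>v n"
  define y where "y = U\<^sup>T *\<^sub>v x"
  have y: "y \<in> carrier_vec n" unfolding y_def using U x by auto
  have "y \<noteq> 0\<^sub>v n"
  proof
    assume "y = 0\<^sub>v n"
    hence "U *\<^sub>v y = 0\<^sub>v n" using mult_zero_vec_right[OF U] by simp
    moreover have "U *\<^sub>v y = (U * U\<^sup>T) *\<^sub>v x" unfolding y_def using U x
      by (intro assoc_mult_mat_vec[symmetric]) auto
    hence "U *\<^sub>v y = x" unfolding UUt using x by simp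
    ultimately show False using x0 by simp
  qed
  then obtain j where j: "j < n" and yj: "y $ j \<noteq> 0" using y by (metis eq_vecI carrier_vecD index_zero_vec)
  have "0 < (\<Sum>j<n. f j * (y $ j)^2)"
  proof (rule sum_pos2[of "{..<n}" j])
    show "0 < f j * (y $ j)^2" using f[OF j] yj by simp
    fix i assume "i \<in> {..<n}"
    thus "0 \<le> f i * (y $ i)^2" using f[of i] by simp
  qed (insert j, auto)
  thus "x \<bullet> ((U * dmat n f * U\<^sup>T) *\<^sub>v x) > 0" unfolding conj_qf[OF U x] y_def .
qed

lemma col_unit:
  fixes U :: "real mat"
  assumes U: "U \<in> carrier_mat n n" and UtU: "U\<^sup>T * U = 1\<^sub>m n" and j: "j < n"
  shows "col U j \<bullet> col U j = 1"
proof -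
  have "(U\<^sup>T * U) $$ (j,j) = col U j \<bullet> col U j" using U j by simp
  thus ?thesis unfolding UtU using j by simp
qed

lemma eig_qf:
  fixes H U :: "real mat"
  assumes U: "U \<in> carrier_mat n n" and UtU: "U\<^sup>T * U = 1\<^sub>m n" and j: "j < n"
    and ev: "H *\<^sub>v col U j = d \<cdot>\<^sub>v col U j"
  shows "col U j \<bullet> (H *\<^sub>v col U j) = d"
proof -
  have "col U j \<bullet> (d \<cdot>\<^sub>v col U j) = d * (col U j \<bullet> col U j)" by (rule scalar_prod_smult_right) simp
  thus ?thesis unfolding ev using col_unit[OF U UtU j] by simp
qed

lemma sqrt_unique:
  fixes R1 R2 :: "real mat"
  assumes R1: "pos_def_mat n R1" and R2: "pos_def_mat n R2"
    and s1: "R1\<^sup>T = R1" and s2: "R2\<^sup>T = R2" and eq: "R1 * R1 = R2 * R2"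
  shows "R1 = R2"
proof -
  have R1c: "R1 \<in> carrier_mat n n" and R2c: "R2 \<in> carrier_mat n n"
    using R1 R2 unfolding pos_def_mat_def by auto
  define D where "D = R1 - R2"
  have D: "D \<in> carrier_mat n n" unfolding D_def using R1c R2c by auto
  have Dt: "D\<^sup>T = D" unfolding D_def using R1c R2c s1 s2 by (simp add: transpose_minus)
  from spectral_sym[OF D Dt] obtain U d where U: "U \<in> carrier_mat n n" and UtU: "U\<^sup>T * U = 1\<^sub>m n"
    and UUt: "U * U\<^sup>T = 1\<^sub>m n" and Dd: "D = U * dmat n d * U\<^sup>T"
    and ev: "\<And>j. j < n \<Longrightarrow> D *\<^sub>v col U j = d j \<cdot>\<^sub>v col U j" by auto
  have d0: "d j = 0" if j: "j < n" for j
  proof -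
    define v where "v = col U j"
    have v: "v \<in> carrier_vec n" unfolding v_def using U j by auto
    have v0: "v \<noteq> 0\<^sub>v n" using col_unit[OF U UtU j] v unfolding v_def[symmetric] by auto
    have Dv: "D *\<^sub>v v = d j \<cdot>\<^sub>v v" using ev[OF j] unfolding v_def .
    have a1: "v \<bullet> (R1 *\<^sub>v v) > 0" using R1 v v0 unfolding pos_def_mat_def by auto
    have a2: "v \<bullet> (R2 *\<^sub>v v) > 0" using R2 v v0 unfolding pos_def_mat_def by auto
    have R1v: "R1 *\<^sub>v v \<in> carrier_vec n" and R2v: "R2 *\<^sub>v v \<in> carrier_vec n" using R1c R2c v by auto
    have t1: "v \<bullet> (R1 *\<^sub>v (D *\<^sub>v v)) = v \<bullet> (R1 *\<^sub>v (R1 *\<^sub>v v)) - v \<bullet> (R1 *\<^sub>v (R2 *\<^sub>v v))"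
      unfolding D_def using R1c R2c v
      by (simp add: minus_mult_distrib_mat_vec mult_minus_distrib_mat_vec scalar_prod_minus_distrib[of v n])
    have t2: "v \<bullet> (D *\<^sub>v (R2 *\<^sub>v v)) = v \<bullet> (R1 *\<^sub>v (R2 *\<^sub>v v)) - v \<bullet> (R2 *\<^sub>v (R2 *\<^sub>v v))"
      unfolding D_def using R1c R2c v
      by (simp add: minus_mult_distrib_mat_vec scalar_prod_minus_distrib[of v n])
    have sq: "R1 *\<^sub>v (R1 *\<^sub>v v) = R2 *\<^sub>v (R2 *\<^sub>v v)"
      using eq R1c R2c v by (metis assoc_mult_mat_vec)
    have t3: "v \<bullet> (R1 *\<^sub>v (D *\<^sub>v v)) = d j * (v \<bullet> (R1 *\<^sub>v v))"
      unfolding Dv using R1c v by (simp add: mult_mat_vec)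
    have t4: "v \<bullet> (D *\<^sub>v (R2 *\<^sub>v v)) = d j * (v \<bullet> (R2 *\<^sub>v v))"
    proof -
      have "v \<bullet> (D *\<^sub>v (R2 *\<^sub>v v)) = (D\<^sup>T *\<^sub>v v) \<bullet> (R2 *\<^sub>v v)"
        by (rule transpose_vec_mult_scalar[OF D R2v v, symmetric])
      also have "\<dots> = d j * (v \<bullet> (R2 *\<^sub>v v))" unfolding Dt Dv using v R2v by simp
      finally show ?thesis .
    qed
    have "d j * (v \<bullet> (R1 *\<^sub>v v) + v \<bullet> (R2 *\<^sub>v v)) = 0"
      using t1 t2 t3 t4 sq by (simp add: algebra_simps)
    thus ?thesis using a1 a2 by simp
  qed
  have "dmat n d = 0\<^sub>m n n" unfolding dmat_def using d0 by (intro eq_matI) auto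
  hence "D = 0\<^sub>m n n" unfolding Dd using U by simp
  show ?thesis
  proof (rule eq_matI)
    fix i j assume "i < dim_row R2" "j < dim_col R2"
    hence i: "i < n" and j: "j < n" using R2c by auto
    have "D $$ (i,j) = 0" using \<open>D = 0\<^sub>m n n\<close> i j by simp
    thus "R1 $$ (i,j) = R2 $$ (i,j)" unfolding D_def using i j R1c R2c by simp
  qed (insert R1c R2c, auto)
qed

lemma inv_mat_eq:
  fixes R X :: "real mat"
  assumes R: "R \<in> carrier_mat n n" and X: "X \<in> carrier_mat n n"
    and RX: "R * X = 1\<^sub>m n" and XR: "X * R = 1\<^sub>m n"
  shows "inv_mat R = X"
  unfolding inv_mat_def
proof (rule the1_equality)
  have dr: "dim_row R = n" using R by simp
  show "\<exists>!X. X \<in> carrier_mat (dim_row R) (dim_row R) \<and> R * X = 1\<^sub>m (dim_row R) \<and> X * R = 1\<^sub>m (dim_row R)"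
    unfolding dr
  proof (rule ex1I[of _ X])
    fix Y assume Y: "Y \<in> carrier_mat n n \<and> R * Y = 1\<^sub>m n \<and> Y * R = 1\<^sub>m n"
    have Yc: "Y \<in> carrier_mat n n" using Y by simp
    have "Y = Y * (R * X)" unfolding RX using Yc by simp
    also have "\<dots> = (Y * R) * X" using Y R X by (simp add: assoc_mult_mat[symmetric, of _ n n _ n _ n])
    also have "\<dots> = X" using Y X by simp
    finally show "Y = X" .
  qed (insert X RX XR, auto)
  show "X \<in> carrier_mat (dim_row R) (dim_row R) \<and> R * X = 1\<^sub>m (dim_row R) \<and> X * R = 1\<^sub>m (dim_row R)"
    using R X RX XR by simp
qed

lemma dmat_cong: "(\<And>i. i < n \<Longrightarrow> f i = g i) \<Longrightarrow> dmat n f = dmat n g"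
  unfolding dmat_def by (intro eq_matI) auto

lemma dmat_one: "dmat n (\<lambda>_. 1) = 1\<^sub>m n"
  unfolding dmat_def by (intro eq_matI) auto

lemma sqrt_props:
  fixes H :: "real mat"
  assumes H: "H \<in> carrier_mat n n" and Ht: "H\<^sup>T = H" and Hpd: "pos_def_mat n H"
  defines "R \<equiv> spd_sqrt H"
  defines "X \<equiv> inv_mat R"
  shows "R \<in> carrier_mat n n \<and> R\<^sup>T = R \<and> R * R = H \<and> pos_def_mat n R \<and>
    X \<in> carrier_mat n n \<and> X\<^sup>T = X \<and> R * X = 1\<^sub>m n \<and> X * R = 1\<^sub>m n"
proof -
  from spectral_sym[OF H Ht] obtain U d where U: "U \<in> carrier_mat n n" and UtU: "U\<^sup>T * U = 1\<^sub>m n"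
    and UUt: "U * U\<^sup>T = 1\<^sub>m n" and Hd: "H = U * dmat n d * U\<^sup>T"
    and ev: "\<And>j. j < n \<Longrightarrow> H *\<^sub>v col U j = d j \<cdot>\<^sub>v col U j" by auto
  have dpos: "d j > 0" if j: "j < n" for j
  proof -
    have c: "col U j \<in> carrier_vec n" using U j by auto
    have "col U j \<noteq> 0\<^sub>v n" using col_unit[OF U UtU j] c by auto
    hence "col U j \<bullet> (H *\<^sub>v col U j) > 0" using Hpd c unfolding pos_def_mat_def by auto
    thus ?thesis unfolding eig_qf[OF U UtU j ev[OF j]] .
  qed
  define R0 where "R0 = U * dmat n (\<lambda>j. sqrt (d j)) * U\<^sup>T"
  define X0 where "X0 = U * dmat n (\<lambda>j. 1 / sqrt (d j)) * U\<^sup>T"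
  have R0: "R0 \<in> carrier_mat n n" and X0: "X0 \<in> carrier_mat n n" unfolding R0_def X0_def using U by auto
  have R0t: "R0\<^sup>T = R0" unfolding R0_def by (rule conj_transpose[OF U])
  have X0t: "X0\<^sup>T = X0" unfolding X0_def by (rule conj_transpose[OF U])
  have R0R0: "R0 * R0 = H" unfolding R0_def conj_mult[OF U UtU] Hd
    by (rule arg_cong[of _ _ "\<lambda>D. U * D * U\<^sup>T"], rule dmat_cong, insert dpos, simp add: less_imp_le)
  have R0pd: "pos_def_mat n R0" unfolding R0_def by (rule conj_pos_def[OF U UUt], insert dpos, simp)
  have R0X0: "R0 * X0 = 1\<^sub>m n" unfolding R0_def X0_def conj_mult[OF U UtU]
  proof -
    have "dmat n (\<lambda>i. sqrt (d i) * (1 / sqrt (d i))) = dmat n (\<lambda>_. 1)"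
    proof (rule dmat_cong)
      fix i assume "i < n" hence "d i > 0" by (rule dpos)
      thus "sqrt (d i) * (1 / sqrt (d i)) = 1" by simp
    qed
    thus "U * dmat n (\<lambda>i. sqrt (d i) * (1 / sqrt (d i))) * U\<^sup>T = 1\<^sub>m n"
      unfolding dmat_one using U UUt by simp
  qed
  have X0R0: "X0 * R0 = 1\<^sub>m n" unfolding R0_def X0_def conj_mult[OF U UtU]
  proof -
    have "dmat n (\<lambda>i. 1 / sqrt (d i) * sqrt (d i)) = dmat n (\<lambda>_. 1)"
    proof (rule dmat_cong)
      fix i assume "i < n" hence "d i > 0" by (rule dpos)
      thus "1 / sqrt (d i) * sqrt (d i) = 1" by simp
    qed
    thus "U * dmat n (\<lambda>i. 1 / sqrt (d i) * sqrt (d i)) * U\<^sup>T = 1\<^sub>m n"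
      unfolding dmat_one using U UUt by simp
  qed
  have dr: "dim_row H = n" using H by simp
  have "R = R0" unfolding R_def spd_sqrt_def dr
  proof (rule the1_equality)
    show "\<exists>!R. R\<^sup>T = R \<and> pos_def_mat n R \<and> R * R = H"
    proof (rule ex1I[of _ R0])
      fix Y assume "Y\<^sup>T = Y \<and> pos_def_mat n Y \<and> Y * Y = H"
      thus "Y = R0" using sqrt_unique[of n Y R0] R0t R0pd R0R0 by auto
    qed (insert R0t R0pd R0R0, auto)
  qed (insert R0t R0pd R0R0, auto)
  moreover have "X = X0" unfolding X_def \<open>R = R0\<close> by (rule inv_mat_eq[OF R0 X0 R0X0 X0R0])
  ultimately show ?thesis using R0 X0 R0t X0t R0R0 R0pd R0X0 X0R0 by simp
qed

definition penrose :: "real mat \<Rightarrow> real mat \<Rightarrow> bool" where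
  "penrose M X \<longleftrightarrow> X \<in> carrier_mat (dim_col M) (dim_row M) \<and>
     M * X * M = M \<and> X * M * X = X \<and> (M * X)\<^sup>T = M * X \<and> (X * M)\<^sup>T = X * M"

lemma mp_unique:
  fixes M X Y :: "real mat"
  assumes M: "M \<in> carrier_mat n n" and X: "penrose M X" and Y: "penrose M Y"
  shows "X = Y"
proof -
  have Xc: "X \<in> carrier_mat n n" and Yc: "Y \<in> carrier_mat n n" using X Y M unfolding penrose_def by auto
  have X1: "M * X * M = M" and X2: "X * M * X = X" and X3: "(M * X)\<^sup>T = M * X" and X4: "(X * M)\<^sup>T = X * M"
    using X unfolding penrose_def by auto
  have Y1: "M * Y * M = M" and Y2: "Y * M * Y = Y" and Y3: "(M * Y)\<^sup>T = M * Y" and Y4: "(Y * M)\<^sup>T = Y * M"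
    using Y unfolding penrose_def by auto
  have Mt: "M\<^sup>T \<in> carrier_mat n n" and Xt: "X\<^sup>T \<in> carrier_mat n n" and Yt: "Y\<^sup>T \<in> carrier_mat n n"
    using M Xc Yc by auto
  note A = assoc_mult_mat[of _ n n _ n _ n]
  have MX: "M * X \<in> carrier_mat n n" and MY: "M * Y \<in> carrier_mat n n" and XM: "X * M \<in> carrier_mat n n"
    and YM: "Y * M \<in> carrier_mat n n" using M Xc Yc by auto
  have B: "M\<^sup>T = M\<^sup>T * (M * Y)"
  proof -
    have "M\<^sup>T = (M * Y * M)\<^sup>T" using Y1 by simp
    also have "\<dots> = M\<^sup>T * (M * Y)\<^sup>T" by (rule transpose_mult[OF MY M])
    finally show ?thesis unfolding Y3 .
  qed
  have XtMt: "X\<^sup>T * M\<^sup>T = M * X" using transpose_mult[OF M Xc] X3 by simp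
  have "X = X * (M * X)" using X2 M Xc by (simp add: A)
  also have "\<dots> = X * (X\<^sup>T * M\<^sup>T)" unfolding XtMt ..
  also have "\<dots> = X * (X\<^sup>T * (M\<^sup>T * (M * Y)))" using B by simp
  also have "X\<^sup>T * (M\<^sup>T * (M * Y)) = (X\<^sup>T * M\<^sup>T) * (M * Y)" by (rule A[symmetric], insert Xt Mt MY, auto)
  also have "\<dots> = M * X * (M * Y)" unfolding XtMt ..
  also have "\<dots> = M * X * M * Y" by (rule A[symmetric], insert MX M Yc, auto)
  also have "\<dots> = M * Y" unfolding X1 ..
  finally have XMY: "X = X * (M * Y)" .
  have C: "M\<^sup>T = X * M * M\<^sup>T"
  proof -
    have "M\<^sup>T = (M * (X * M))\<^sup>T" using X1 M Xc by (simp add: A)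
    also have "\<dots> = (X * M)\<^sup>T * M\<^sup>T" by (rule transpose_mult[OF M XM])
    finally show ?thesis unfolding X4 .
  qed
  have MtYt: "M\<^sup>T * Y\<^sup>T = Y * M" using transpose_mult[OF Yc M] Y4 by simp
  have "Y = (Y * M) * Y" using Y2 by simp
  also have "\<dots> = (M\<^sup>T * Y\<^sup>T) * Y" unfolding MtYt ..
  also have "\<dots> = ((X * M * M\<^sup>T) * Y\<^sup>T) * Y" using C by simp
  also have "(X * M * M\<^sup>T) * Y\<^sup>T = (X * M) * (M\<^sup>T * Y\<^sup>T)" by (rule A, insert XM Mt Yt, auto)
  also have "\<dots> = (X * M) * (Y * M)" unfolding MtYt ..
  also have "(X * M) * (Y * M) * Y = X * (M * (Y * M * Y))" using Xc M Yc by (simp add: A)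
  also have "\<dots> = X * (M * Y)" unfolding Y2 ..
  finally have "Y = X * (M * Y)" .
  with XMY show ?thesis by simp
qed

lemma dmat_add: "dmat n f + dmat n g = dmat n (\<lambda>i. f i + g i)"
  unfolding dmat_def by (intro eq_matI) auto

lemma mp_exists:
  fixes M :: "real mat"
  assumes M: "M \<in> carrier_mat n n"
  shows "\<exists>X. penrose M X"
proof -
  define G where "G = M\<^sup>T * M"
  have Mt: "M\<^sup>T \<in> carrier_mat n n" using M by auto
  have G: "G \<in> carrier_mat n n" unfolding G_def using M by auto
  have Gt: "G\<^sup>T = G" unfolding G_def using transpose_mult[OF Mt M] by simp
  from spectral_sym[OF G Gt] obtain U d where U: "U \<in> carrier_mat n n" and UtU: "U\<^sup>T * U = 1\<^sub>m n"
    and UUt: "U * U\<^sup>T = 1\<^sub>m n" and Gd: "G = U * dmat n d * U\<^sup>T"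
    and ev: "\<And>j. j < n \<Longrightarrow> G *\<^sub>v col U j = d j \<cdot>\<^sub>v col U j" by auto
  have Ut: "U\<^sup>T \<in> carrier_mat n n" using U by auto
  note A = assoc_mult_mat[of _ n n _ n _ n]
  define e where "e j = (if d j = 0 then 0 else (1::real))" for j
  define p where "p j = (if d j = 0 then 0 else 1 / d j)" for j
  define f where "f j = (if d j = 0 then 1 else (0::real))" for j
  define Pi where "Pi = U * dmat n e * U\<^sup>T"
  define Pd where "Pd = U * dmat n p * U\<^sup>T"
  define Fm where "Fm = U * dmat n f * U\<^sup>T"
  have Pi: "Pi \<in> carrier_mat n n" and Pd: "Pd \<in> carrier_mat n n" and Fm: "Fm \<in> carrier_mat n n"
    unfolding Pi_def Pd_def Fm_def using U by auto
  define X where "X = Pd * M\<^sup>T"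
  have Xc: "X \<in> carrier_mat n n" unfolding X_def using Pd M by auto
  have XM: "X * M = Pi"
  proof -
    have "X * M = Pd * G" unfolding X_def G_def by (rule A[OF Pd Mt M])
    also have "\<dots> = U * dmat n (\<lambda>i. p i * d i) * U\<^sup>T" unfolding Pd_def Gd by (rule conj_mult[OF U UtU])
    also have "dmat n (\<lambda>i. p i * d i) = dmat n e" unfolding p_def e_def by (rule dmat_cong) auto
    finally show ?thesis unfolding Pi_def .
  qed
  have MFm: "M * Fm = 0\<^sub>m n n"
  proof -
    have MU: "M * U \<in> carrier_mat n n" using M U by auto
    have Z: "M * U * dmat n f = 0\<^sub>m n n"
    proof (rule eq_matI)
      fix a j assume "a < dim_row (0\<^sub>m n n :: real mat)" "j < dim_col (0\<^sub>m n n :: real mat)"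
      hence a: "a < n" and j: "j < n" by auto
      have "(M * U * dmat n f) $$ (a,j) = (M * U) $$ (a,j) * f j" unfolding mult_dmat_right[OF MU]
        using a j by simp
      also have "\<dots> = 0"
      proof (cases "d j = 0")
        case False thus ?thesis unfolding f_def by simp
      next
        case True
        define u where "u = col U j"
        have u: "u \<in> carrier_vec n" unfolding u_def using U j by auto
        have Mu: "M *\<^sub>v u \<in> carrier_vec n" using M u by auto
        have "(M *\<^sub>v u) \<bullet> (M *\<^sub>v u) = (M\<^sup>T *\<^sub>v (M *\<^sub>v u)) \<bullet> u"
          by (rule transpose_vec_mult_scalar[OF M u Mu, symmetric])
        also have "M\<^sup>T *\<^sub>v (M *\<^sub>v u) = G *\<^sub>v u" unfolding G_def
          by (rule assoc_mult_mat_vec[symmetric, OF Mt M u])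
        also have "G *\<^sub>v u = 0\<^sub>v n" unfolding u_def ev[OF j] True using U j by (intro eq_vecI) auto
        finally have "(M *\<^sub>v u) \<bullet> (M *\<^sub>v u) = 0" using u by simp
        hence "M *\<^sub>v u = 0\<^sub>v n" by (rule sprod_self_zero[OF Mu])
        hence "(M *\<^sub>v u) $ a = 0" using a by simp
        moreover have "(M * U) $$ (a,j) = (M *\<^sub>v u) $ a" unfolding u_def using M U a j by simp
        ultimately show ?thesis by simp
      qed
      finally show "(M * U * dmat n f) $$ (a,j) = 0\<^sub>m n n $$ (a,j)" using a j by simp
    qed (insert M U, auto)
    have "M * Fm = M * (U * dmat n f) * U\<^sup>T" unfolding Fm_def
      by (rule A[symmetric], insert M U, auto)
    also have "M * (U * dmat n f) = M * U * dmat n f" by (rule A[symmetric], insert M U, auto)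
    finally show ?thesis unfolding Z using Ut by simp
  qed
  have PiFm: "Pi + Fm = 1\<^sub>m n"
  proof -
    have "Pi + Fm = (U * dmat n e + U * dmat n f) * U\<^sup>T" unfolding Pi_def Fm_def
      by (rule add_mult_distrib_mat[symmetric], insert U, auto)
    also have "U * dmat n e + U * dmat n f = U * (dmat n e + dmat n f)"
      by (rule mult_add_distrib_mat[symmetric], insert U, auto)
    also have "dmat n e + dmat n f = 1\<^sub>m n" unfolding dmat_add dmat_one[symmetric] e_def f_def
      by (rule dmat_cong) auto
    finally show ?thesis using U UUt by simp
  qed
  have MPi: "M * Pi = M"
  proof -
    have "M = M * (Pi + Fm)" unfolding PiFm using M by simp
    also have "\<dots> = M * Pi + M * Fm" by (rule mult_add_distrib_mat, insert M Pi Fm, auto)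
    finally show ?thesis unfolding MFm using M Pi by simp
  qed
  have P1: "M * X * M = M" using MPi XM by (simp add: A[OF M Xc M])
  have P2: "X * M * X = X"
  proof -
    have "X * M * X = Pi * X" unfolding XM ..
    also have "\<dots> = Pi * (Pd * M\<^sup>T)" unfolding X_def ..
    also have "\<dots> = (Pi * Pd) * M\<^sup>T" by (rule A[symmetric, OF Pi Pd Mt])
    also have "Pi * Pd = U * dmat n (\<lambda>i. e i * p i) * U\<^sup>T" unfolding Pi_def Pd_def by (rule conj_mult[OF U UtU])
    also have "dmat n (\<lambda>i. e i * p i) = dmat n p" unfolding e_def p_def by (rule dmat_cong) auto
    finally show ?thesis unfolding Pd_def[symmetric] X_def .
  qed
  have P3: "(M * X)\<^sup>T = M * X"
  proof -
    have Pdt: "Pd\<^sup>T = Pd" unfolding Pd_def by (rule conj_transpose[OF U])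
    have e1: "M * X = M * Pd * M\<^sup>T" unfolding X_def by (rule A[symmetric, OF M Pd Mt])
    have "(M * Pd * M\<^sup>T)\<^sup>T = (M\<^sup>T)\<^sup>T * (M * Pd)\<^sup>T" by (rule transpose_mult, insert M Pd, auto)
    also have "(M * Pd)\<^sup>T = Pd\<^sup>T * M\<^sup>T" by (rule transpose_mult[OF M Pd])
    also have "(M\<^sup>T)\<^sup>T * (Pd\<^sup>T * M\<^sup>T) = M * Pd * M\<^sup>T" unfolding Pdt transpose_transpose
      by (rule A[symmetric, OF M Pd Mt])
    finally show ?thesis unfolding e1 .
  qed
  have P4: "(X * M)\<^sup>T = X * M" unfolding XM Pi_def by (rule conj_transpose[OF U])
  show ?thesis unfolding penrose_def using Xc M P1 P2 P3 P4 by (intro exI[of _ X]) auto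
qed

lemma mp_inverse_penrose:
  fixes M :: "real mat"
  assumes M: "M \<in> carrier_mat n n"
  shows "penrose M (mp_inverse M)"
proof -
  from mp_exists[OF M] obtain X where X: "penrose M X" by auto
  have "\<exists>!X. penrose M X" using X mp_unique[OF M] by blast
  hence "penrose M (THE X. penrose M X)" by (rule theI')
  moreover have "mp_inverse M = (THE X. penrose M X)" unfolding mp_inverse_def penrose_def ..
  ultimately show ?thesis by simp
qed

lemma zero_append_vec: "0\<^sub>v n @\<^sub>v 0\<^sub>v m = (0\<^sub>v (n+m) :: 'a :: zero vec)"
  by (intro eq_vecI) auto

lemma block_mult:
  fixes G B G1 :: "'a :: comm_ring_1 mat"
  assumes G: "G \<in> carrier_mat n n" and B: "B \<in> carrier_mat m n" and B1: "B1 \<in> carrier_mat n m"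
    and x: "x \<in> carrier_vec n" and y: "y \<in> carrier_vec m"
  shows "four_block_mat G B1 B (0\<^sub>m m m) *\<^sub>v (x @\<^sub>v y) = (G *\<^sub>v x + B1 *\<^sub>v y) @\<^sub>v (B *\<^sub>v x)"
proof -
  have "four_block_mat G B1 B (0\<^sub>m m m) *\<^sub>v (x @\<^sub>v y) = (G *\<^sub>v x + B1 *\<^sub>v y) @\<^sub>v (B *\<^sub>v x + 0\<^sub>m m m *\<^sub>v y)"
    by (rule four_block_mat_mult_vec[OF G B1 B _ x y], simp)
  also have "B *\<^sub>v x + 0\<^sub>m m m *\<^sub>v y = B *\<^sub>v x" using B x y by (intro eq_vecI) (auto simp: scalar_prod_def)
  finally show ?thesis .
qed

lemma null_incl:
  fixes G G' B B1 :: "real mat"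
  assumes G: "pos_def_mat n G" and G': "G' \<in> carrier_mat n n" and B: "B \<in> carrier_mat m n"
    and B1: "B1 \<in> carrier_mat n m"
    and BB: "\<And>x y. x \<in> carrier_vec n \<Longrightarrow> y \<in> carrier_vec m \<Longrightarrow> B *\<^sub>v x = 0\<^sub>v m \<Longrightarrow> x \<bullet> (B1 *\<^sub>v y) = 0"
    and v: "v \<in> carrier_vec (n+m)"
    and eq: "four_block_mat G B1 B (0\<^sub>m m m) *\<^sub>v v = 0\<^sub>v (n+m)"
  shows "four_block_mat G' B1 B (0\<^sub>m m m) *\<^sub>v v = 0\<^sub>v (n+m)"
proof -
  have Gc: "G \<in> carrier_mat n n" using G unfolding pos_def_mat_def by auto
  define x where "x = vec_first v n"
  define y where "y = vec_last v m"
  have x: "x \<in> carrier_vec n" and y: "y \<in> carrier_vec m" unfolding x_def y_def by auto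
  have vxy: "v = x @\<^sub>v y" unfolding x_def y_def using v by simp
  have Gx: "G *\<^sub>v x \<in> carrier_vec n" and B1y: "B1 *\<^sub>v y \<in> carrier_vec n" and Bx: "B *\<^sub>v x \<in> carrier_vec m"
    using Gc B1 B x y by auto
  from eq[unfolded vxy block_mult[OF Gc B B1 x y]]
  have "(G *\<^sub>v x + B1 *\<^sub>v y) @\<^sub>v (B *\<^sub>v x) = 0\<^sub>v n @\<^sub>v 0\<^sub>v m" unfolding zero_append_vec .
  hence e1: "G *\<^sub>v x + B1 *\<^sub>v y = 0\<^sub>v n" and e2: "B *\<^sub>v x = 0\<^sub>v m"
    using append_vec_eq[of "G *\<^sub>v x + B1 *\<^sub>v y" n "0\<^sub>v n"] Gx B1y by auto
  have "x \<bullet> (G *\<^sub>v x + B1 *\<^sub>v y) = 0" unfolding e1 using x by simp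
  hence "x \<bullet> (G *\<^sub>v x) + x \<bullet> (B1 *\<^sub>v y) = 0" using x Gx B1y by (simp add: scalar_prod_add_distrib)
  hence "x \<bullet> (G *\<^sub>v x) = 0" using BB[OF x y e2] by simp
  hence x0: "x = 0\<^sub>v n" using G x unfolding pos_def_mat_def by force
  have "B1 *\<^sub>v y = 0\<^sub>v n" using e1 unfolding x0 using Gc B1y by (simp add: mult_zero_vec_right)
  thus ?thesis unfolding vxy x0 using block_mult[OF G' B B1 _ y, of "0\<^sub>v n"] G' B
    by (simp add: mult_zero_vec_right zero_append_vec)
qed

lemma two_by_two:
  fixes u v :: "real vec"
  assumes u: "u \<in> carrier_vec k" and v: "v \<in> carrier_vec k"
    and e1: "u = \<alpha> \<cdot>\<^sub>v u - \<beta> \<cdot>\<^sub>v v" and e2: "v = \<beta> \<cdot>\<^sub>v u + \<alpha> \<cdot>\<^sub>v v"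
    and ab: "\<alpha> \<noteq> 1 \<or> \<beta> \<noteq> 0"
  shows "u = 0\<^sub>v k \<and> v = 0\<^sub>v k"
proof -
  have nz: "(1-\<alpha>)^2 + \<beta>^2 \<noteq> 0"
  proof
    assume "(1-\<alpha>)^2 + \<beta>^2 = 0"
    hence "(1-\<alpha>)^2 = 0 \<and> \<beta>^2 = 0" using zero_le_power2[of "1-\<alpha>"] zero_le_power2[of \<beta>] by linarith
    thus False using ab by simp
  qed
  have "u $ i = 0 \<and> v $ i = 0" if i: "i < k" for i
  proof -
    have a: "u $ i = \<alpha> * u $ i - \<beta> * v $ i" using arg_cong[OF e1, of "\<lambda>w. w $ i"] i u v by simp
    have b: "v $ i = \<beta> * u $ i + \<alpha> * v $ i" using arg_cong[OF e2, of "\<lambda>w. w $ i"] i u v by simp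
    have "((1-\<alpha>)^2 + \<beta>^2) * u $ i = (1-\<alpha>) * ((1-\<alpha>) * u $ i + \<beta> * v $ i) - \<beta> * ((1-\<alpha>) * v $ i - \<beta> * u $ i)"
      by (simp add: algebra_simps power2_eq_square)
    also have "\<dots> = 0" using a b by (simp add: algebra_simps)
    finally have ui: "u $ i = 0" using nz by (simp only: mult_eq_0_iff) simp
    have "((1-\<alpha>)^2 + \<beta>^2) * v $ i = (1-\<alpha>) * ((1-\<alpha>) * v $ i - \<beta> * u $ i) + \<beta> * ((1-\<alpha>) * u $ i + \<beta> * v $ i)"
      by (simp add: algebra_simps power2_eq_square)
    also have "\<dots> = 0" using a b by (simp add: algebra_simps)
    finally have "v $ i = 0" using nz by (simp only: mult_eq_0_iff) simp
    with ui show ?thesis by simp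
  qed
  thus ?thesis using u v by (auto intro!: eq_vecI)
qed

locale setting =
  fixes n m :: nat and W B :: "real mat" and \<omega> :: real
  assumes W: "pos_def_mat n W" and B: "B \<in> carrier_mat m n" and \<omega>0: "\<omega> > 0" and n0: "n > 0"
begin

abbreviation "H \<equiv> (1/2) \<cdot>\<^sub>m (W + W\<^sup>T)"
abbreviation "S \<equiv> (1/2) \<cdot>\<^sub>m (W - W\<^sup>T)"
abbreviation "P \<equiv> \<omega> \<cdot>\<^sub>m H"
abbreviation "K \<equiv> inv_mat (spd_sqrt H) * S * inv_mat (spd_sqrt H)"
abbreviation "A \<equiv> four_block_mat W B\<^sup>T (- B) (0\<^sub>m m m)"
abbreviation "M \<equiv> four_block_mat P B\<^sup>T (- B) (0\<^sub>m m m)"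

lemma Wc: "W \<in> carrier_mat n n" using W unfolding pos_def_mat_def by auto
lemma Wt: "W\<^sup>T \<in> carrier_mat n n" using Wc by auto
lemma Hc: "H \<in> carrier_mat n n" using Wc by auto
lemma Sc: "S \<in> carrier_mat n n" using Wc by auto
lemma Pc: "P \<in> carrier_mat n n" using Wc by auto
lemma Ht: "H\<^sup>T = H" using Wc by (intro eq_matI) auto
lemma St: "S\<^sup>T = - S" using Wc by (intro eq_matI) (auto simp: field_simps)
lemma Pt: "P\<^sup>T = P" using Wc by (intro eq_matI) auto

lemma WtW: "x \<in> carrier_vec n \<Longrightarrow> x \<bullet> (W\<^sup>T *\<^sub>v x) = x \<bullet> (W *\<^sub>v x)"
  using transpose_vec_mult_scalar[OF Wc, of x x] Wc by (simp add: comm_scalar_prod[of _ n])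

lemma Hv: "x \<in> carrier_vec n \<Longrightarrow> H *\<^sub>v x = (1/2) \<cdot>\<^sub>v (W *\<^sub>v x + W\<^sup>T *\<^sub>v x)"
  using Wc by (simp add: smult_mat_mult_vec[of _ n n] add_mult_distrib_mat_vec)

lemma Sv: "x \<in> carrier_vec n \<Longrightarrow> S *\<^sub>v x = (1/2) \<cdot>\<^sub>v (W *\<^sub>v x - W\<^sup>T *\<^sub>v x)"
proof -
  assume x: "x \<in> carrier_vec n"
  have "S *\<^sub>v x = (1/2) \<cdot>\<^sub>v ((W - W\<^sup>T) *\<^sub>v x)" by (rule smult_mat_mult_vec, insert Wc x, auto)
  also have "(W - W\<^sup>T) *\<^sub>v x = W *\<^sub>v x - W\<^sup>T *\<^sub>v x" by (rule minus_mult_distrib_mat_vec, insert Wc x, auto)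
  finally show ?thesis .
qed

lemma Pv: "x \<in> carrier_vec n \<Longrightarrow> P *\<^sub>v x = \<omega> \<cdot>\<^sub>v (H *\<^sub>v x)"
  using Wc by (simp add: smult_mat_mult_vec[of _ n n])

lemma qf_H: "x \<in> carrier_vec n \<Longrightarrow> x \<bullet> (H *\<^sub>v x) = x \<bullet> (W *\<^sub>v x)"
  using WtW[of x] Wc by (simp add: Hv scalar_prod_add_distrib[of _ n])

lemma qf_P: "x \<in> carrier_vec n \<Longrightarrow> x \<bullet> (P *\<^sub>v x) = \<omega> * (x \<bullet> (H *\<^sub>v x))"
  using Wc by (simp add: Pv)

lemma bl_S: "p \<in> carrier_vec n \<Longrightarrow> q \<in> carrier_vec n \<Longrightarrow> 2 * (p \<bullet> (S *\<^sub>v q)) = p \<bullet> (W *\<^sub>v q) - q \<bullet> (W *\<^sub>v p)"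
proof -
  assume p: "p \<in> carrier_vec n" and q: "q \<in> carrier_vec n"
  have "p \<bullet> (W\<^sup>T *\<^sub>v q) = q \<bullet> (W *\<^sub>v p)"
    using transpose_vec_mult_scalar[OF Wc p q] Wc p q by (simp add: comm_scalar_prod[of _ n])
  thus ?thesis using p q Wc by (simp add: Sv scalar_prod_minus_distrib[of _ n])
qed

lemma bl_P: "p \<in> carrier_vec n \<Longrightarrow> q \<in> carrier_vec n \<Longrightarrow> p \<bullet> (P *\<^sub>v q) = q \<bullet> (P *\<^sub>v p)"
proof -
  assume p: "p \<in> carrier_vec n" and q: "q \<in> carrier_vec n"
  have "(P\<^sup>T *\<^sub>v p) \<bullet> q = p \<bullet> (P *\<^sub>v q)" by (rule transpose_vec_mult_scalar[OF Pc q p])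
  thus ?thesis unfolding Pt using Pc p q by (simp add: comm_scalar_prod[of _ n])
qed

lemma H_pd: "pos_def_mat n H" unfolding pos_def_mat_def using Hc qf_H W unfolding pos_def_mat_def by auto
lemma P_pd: "pos_def_mat n P" unfolding pos_def_mat_def using Pc qf_P H_pd \<omega>0 unfolding pos_def_mat_def by auto

lemma K_bound:
  assumes p: "p \<in> carrier_vec n" and q: "q \<in> carrier_vec n"
  shows "(2 * (p \<bullet> (S *\<^sub>v q)))^2 \<le> (spectral_radius (cmat K))^2 * (p \<bullet> (H *\<^sub>v p) + q \<bullet> (H *\<^sub>v q))^2"
proof -
  define R where "R = spd_sqrt H"
  define Y where "Y = inv_mat R"
  from sqrt_props[OF Hc Ht H_pd] have R: "R \<in> carrier_mat n n" and Rt: "R\<^sup>T = R" and RR: "R * R = H"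
    and Y: "Y \<in> carrier_mat n n" and Yt: "Y\<^sup>T = Y" and YR: "Y * R = 1\<^sub>m n"
    unfolding R_def Y_def by auto
  define \<rho> where "\<rho> = spectral_radius (cmat K)"
  have KY: "K = Y * S * Y" unfolding Y_def R_def ..
  have Kc: "K \<in> carrier_mat n n" unfolding KY using Y Sc by auto
  have Kt: "K\<^sup>T = - K"
  proof -
    have "K\<^sup>T = Y\<^sup>T * (Y * S)\<^sup>T" unfolding KY by (rule transpose_mult[of "Y * S" n n Y n], insert Y Sc, auto)
    also have "(Y * S)\<^sup>T = S\<^sup>T * Y\<^sup>T" by (rule transpose_mult[OF Y Sc])
    finally have "K\<^sup>T = Y * (- S * Y)" unfolding St Yt .
    also have "- S * Y = - (S * Y)" by (rule uminus_mult_left_mat, insert Sc Y, auto)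
    also have "Y * - (S * Y) = - (Y * (S * Y))" by (rule uminus_mult_right_mat, insert Sc Y, auto)
    also have "Y * (S * Y) = Y * S * Y" by (rule assoc_mult_mat[symmetric], insert Sc Y, auto)
    finally show ?thesis unfolding KY .
  qed
  define u where "u = R *\<^sub>v p"
  define w where "w = R *\<^sub>v q"
  have u: "u \<in> carrier_vec n" and w: "w \<in> carrier_vec n" unfolding u_def w_def using R p q by auto
  have pu: "p = Y *\<^sub>v u" unfolding u_def using YR Y R p by (simp add: assoc_mult_mat_vec[symmetric, of _ n n])
  have qw: "q = Y *\<^sub>v w" unfolding w_def using YR Y R q by (simp add: assoc_mult_mat_vec[symmetric, of _ n n])
  have Hqf: "x \<bullet> (H *\<^sub>v x) = (R *\<^sub>v x) \<bullet> (R *\<^sub>v x)" if x: "x \<in> carrier_vec n" for x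
  proof -
    have Rx: "R *\<^sub>v x \<in> carrier_vec n" using R x by auto
    have "H *\<^sub>v x = R *\<^sub>v (R *\<^sub>v x)" unfolding RR[symmetric] using R x by (simp add: assoc_mult_mat_vec)
    moreover have "(R\<^sup>T *\<^sub>v x) \<bullet> (R *\<^sub>v x) = x \<bullet> (R *\<^sub>v (R *\<^sub>v x))" by (rule transpose_vec_mult_scalar[OF R Rx x])
    ultimately show ?thesis unfolding Rt by simp
  qed
  have Sb: "p \<bullet> (S *\<^sub>v q) = u \<bullet> (K *\<^sub>v w)"
  proof -
    have Sw: "S *\<^sub>v (Y *\<^sub>v w) \<in> carrier_vec n" using Sc Y w by auto
    have "p \<bullet> (S *\<^sub>v q) = (Y *\<^sub>v u) \<bullet> (S *\<^sub>v (Y *\<^sub>v w))" unfolding pu qw ..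
    also have "\<dots> = (Y\<^sup>T *\<^sub>v u) \<bullet> (S *\<^sub>v (Y *\<^sub>v w))" unfolding Yt ..
    also have "\<dots> = u \<bullet> (Y *\<^sub>v (S *\<^sub>v (Y *\<^sub>v w)))" by (rule transpose_vec_mult_scalar[OF Y Sw u])
    also have "Y *\<^sub>v (S *\<^sub>v (Y *\<^sub>v w)) = K *\<^sub>v w" unfolding KY using Y Sc w
      by (simp add: assoc_mult_mat_vec[of _ n n _ n])
    finally show ?thesis .
  qed
  have Kw: "K *\<^sub>v w \<in> carrier_vec n" using Kc w by auto
  have c1: "(u \<bullet> (K *\<^sub>v w))^2 \<le> (u \<bullet> u) * ((K *\<^sub>v w) \<bullet> (K *\<^sub>v w))" by (rule cs_real[OF u Kw])
  have c2: "(K *\<^sub>v w) \<bullet> (K *\<^sub>v w) \<le> \<rho>^2 * (w \<bullet> w)" unfolding \<rho>_def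
    by (rule sym_skew_bound[OF Kc n0 _ w], insert Kt, simp)
  have uu: "u \<bullet> u \<ge> 0" and ww: "w \<bullet> w \<ge> 0" by (rule sprod_self_nonneg)+
  have "(2 * (p \<bullet> (S *\<^sub>v q)))^2 = 4 * (u \<bullet> (K *\<^sub>v w))^2" unfolding Sb by (simp add: power2_eq_square)
  also have "\<dots> \<le> 4 * ((u \<bullet> u) * (\<rho>^2 * (w \<bullet> w)))"
    using c1 mult_left_mono[OF c2 uu] by simp
  also have "\<dots> = \<rho>^2 * (4 * (u \<bullet> u) * (w \<bullet> w))" by simp
  also have "\<dots> \<le> \<rho>^2 * ((u \<bullet> u) + (w \<bullet> w))^2"
  proof (rule mult_left_mono)
    have "0 \<le> ((u \<bullet> u) - (w \<bullet> w))^2" by simp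
    thus "4 * (u \<bullet> u) * (w \<bullet> w) \<le> ((u \<bullet> u) + (w \<bullet> w))^2" by (simp add: power2_eq_square algebra_simps)
  qed simp
  also have "(u \<bullet> u) + (w \<bullet> w) = p \<bullet> (H *\<^sub>v p) + q \<bullet> (H *\<^sub>v q)" unfolding Hqf[OF p] Hqf[OF q] u_def w_def ..
  finally show ?thesis unfolding \<rho>_def .
qed

end

lemma mat_eq_by_vec:
  fixes F G :: "'a :: comm_ring_1 mat"
  assumes F: "F \<in> carrier_mat r c" and G: "G \<in> carrier_mat r c"
    and eq: "\<And>v. v \<in> carrier_vec c \<Longrightarrow> F *\<^sub>v v = G *\<^sub>v v"
  shows "F = G"
proof (rule eq_matI)
  fix i j assume "i < dim_row G" "j < dim_col G"
  hence i: "i < r" and j: "j < c" using G by auto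
  have "F $$ (i,j) = (F *\<^sub>v unit_vec c j) $ i" using F i j by simp
  also have "\<dots> = (G *\<^sub>v unit_vec c j) $ i" using eq[of "unit_vec c j"] by simp
  also have "\<dots> = G $$ (i,j)" using G i j by simp
  finally show "F $$ (i,j) = G $$ (i,j)" .
qed (insert F G, auto)

lemma neg_mult_zero:
  fixes B :: "'a :: comm_ring_1 mat"
  assumes B: "B \<in> carrier_mat m n" and x: "x \<in> carrier_vec n" and e: "(- B) *\<^sub>v x = 0\<^sub>v m"
  shows "B *\<^sub>v x = 0\<^sub>v m"
proof (rule eq_vecI)
  fix i assume "i < dim_vec (0\<^sub>v m :: 'a vec)" hence i: "i < m" by simp
  have "((- B) *\<^sub>v x) $ i = 0" using e i by simp
  hence "- ((B *\<^sub>v x) $ i) = 0" using B x i by simp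
  thus "(B *\<^sub>v x) $ i = 0\<^sub>v m $ i" using i by simp
qed (insert B, auto)

context setting
begin

lemma Wdims[simp]: "dim_row W = n" "dim_col W = n" "dim_row B = m" "dim_col B = n"
  using Wc B by auto

abbreviation "N \<equiv> n + m"
abbreviation "X \<equiv> mp_inverse M"

lemma Ac: "A \<in> carrier_mat N N" using Wc B by auto
lemma Mc: "M \<in> carrier_mat N N" using Pc B by auto
lemma Xp: "penrose M X" by (rule mp_inverse_penrose[OF Mc])
lemma Xc: "X \<in> carrier_mat N N" using Xp Mc Wc unfolding penrose_def by (auto dest: carrier_matD)
lemma MXM: "M * X * M = M" using Xp unfolding penrose_def by auto
lemma XMX: "X * M * X = X" using Xp unfolding penrose_def by auto
lemma MXt: "(M * X)\<^sup>T = M * X" using Xp unfolding penrose_def by auto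
lemma XMt: "(X * M)\<^sup>T = X * M" using Xp unfolding penrose_def by auto

lemma Mt_eq: "M\<^sup>T = four_block_mat P (- B\<^sup>T) B (0\<^sub>m m m)"
  using transpose_four_block_mat[of P n n "B\<^sup>T" m "- B" m "0\<^sub>m m m"] Pc B Pt
  by (simp add: transpose_uminus)
lemma At_eq: "A\<^sup>T = four_block_mat W\<^sup>T (- B\<^sup>T) B (0\<^sub>m m m)"
  using transpose_four_block_mat[of W n n "B\<^sup>T" m "- B" m "0\<^sub>m m m"] Wc B
  by (simp add: transpose_uminus)

lemma null_M:
  assumes v: "v \<in> carrier_vec N" and e: "M *\<^sub>v v = 0\<^sub>v N"
  shows "A *\<^sub>v v = 0\<^sub>v N"
proof (rule null_incl[OF P_pd Wc _ _ _ v e])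
  show "- B \<in> carrier_mat m n" using B by simp
  show "B\<^sup>T \<in> carrier_mat n m" using B by simp
  fix x y :: "real vec" assume x: "x \<in> carrier_vec n" and y: "y \<in> carrier_vec m" and Bx: "(- B) *\<^sub>v x = 0\<^sub>v m"
  have "B *\<^sub>v x = 0\<^sub>v m" by (rule neg_mult_zero[OF B x Bx])
  moreover have "(B\<^sup>T *\<^sub>v y) \<bullet> x = y \<bullet> (B *\<^sub>v x)" by (rule transpose_vec_mult_scalar[OF B x y])
  ultimately show "x \<bullet> (B\<^sup>T *\<^sub>v y) = 0" using x y B by (simp add: comm_scalar_prod[of x n])
qed

lemma null_MT:
  assumes v: "v \<in> carrier_vec N" and e: "M\<^sup>T *\<^sub>v v = 0\<^sub>v N"
  shows "A\<^sup>T *\<^sub>v v = 0\<^sub>v N"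
  unfolding At_eq
proof (rule null_incl[OF P_pd Wt _ _ _ v e[unfolded Mt_eq]])
  show "B \<in> carrier_mat m n" using B by simp
  show "- B\<^sup>T \<in> carrier_mat n m" using B by simp
  fix x y :: "real vec" assume x: "x \<in> carrier_vec n" and y: "y \<in> carrier_vec m" and Bx: "B *\<^sub>v x = 0\<^sub>v m"
  have "(B\<^sup>T *\<^sub>v y) \<bullet> x = y \<bullet> (B *\<^sub>v x)" by (rule transpose_vec_mult_scalar[OF B x y])
  hence "x \<bullet> (B\<^sup>T *\<^sub>v y) = 0" using x y B Bx by (simp add: comm_scalar_prod[of x n])
  thus "x \<bullet> ((- B\<^sup>T) *\<^sub>v y) = 0" using x y B by simp
qed

lemma MXA: "M * X * A = A"
proof (rule mat_eq_by_vec[of _ N N])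
  show "M * X * A \<in> carrier_mat N N" using Mc Xc Ac by auto
  show "A \<in> carrier_mat N N" by (rule Ac)
  fix w :: "real vec" assume w: "w \<in> carrier_vec N"
  have MX: "M * X \<in> carrier_mat N N" using Mc Xc by auto
  define u where "u = A *\<^sub>v w"
  have u: "u \<in> carrier_vec N" unfolding u_def using Ac w by auto
  define d where "d = u - (M * X) *\<^sub>v u"
  have MXu: "(M * X) *\<^sub>v u \<in> carrier_vec N" using MX u by auto
  have d: "d \<in> carrier_vec N" unfolding d_def using MXu u by auto
  have MXMX: "(M * X) * (M * X) = M * X"
  proof -
    have "(M * X) * (M * X) = (M * X * M) * X" by (rule assoc_mult_mat[symmetric, OF MX Mc Xc])
    thus ?thesis unfolding MXM .
  qed
  have MtMX: "M\<^sup>T * (M * X) = M\<^sup>T"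
  proof -
    have "M\<^sup>T * (M * X) = M\<^sup>T * (M * X)\<^sup>T" unfolding MXt ..
    also have "\<dots> = ((M * X) * M)\<^sup>T" by (rule transpose_mult[symmetric, OF MX Mc])
    finally show ?thesis unfolding MXM .
  qed
  have "(M * X) *\<^sub>v d = (M * X) *\<^sub>v u - (M * X) *\<^sub>v ((M * X) *\<^sub>v u)"
    unfolding d_def by (rule mult_minus_distrib_mat_vec[OF MX u MXu])
  also have "(M * X) *\<^sub>v ((M * X) *\<^sub>v u) = ((M * X) * (M * X)) *\<^sub>v u"
    by (rule assoc_mult_mat_vec[symmetric, OF MX MX u])
  also have "\<dots> = (M * X) *\<^sub>v u" unfolding MXMX ..
  finally have MXd: "(M * X) *\<^sub>v d = 0\<^sub>v N" using MXu by simp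
  have d1: "d \<bullet> ((M * X) *\<^sub>v u) = 0"
  proof -
    have "((M * X)\<^sup>T *\<^sub>v d) \<bullet> u = d \<bullet> ((M * X) *\<^sub>v u)" by (rule transpose_vec_mult_scalar[OF MX u d])
    thus ?thesis unfolding MXt MXd using u by simp
  qed
  have "M\<^sup>T *\<^sub>v d = M\<^sup>T *\<^sub>v u - M\<^sup>T *\<^sub>v ((M * X) *\<^sub>v u)"
    unfolding d_def by (rule mult_minus_distrib_mat_vec, insert Mc u MXu, auto)
  also have "M\<^sup>T *\<^sub>v ((M * X) *\<^sub>v u) = (M\<^sup>T * (M * X)) *\<^sub>v u"
    by (rule assoc_mult_mat_vec[symmetric, of "M\<^sup>T" N N "M * X" N u], insert Mc MX u, auto)
  also have "\<dots> = M\<^sup>T *\<^sub>v u" unfolding MtMX ..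
  finally have "M\<^sup>T *\<^sub>v d = 0\<^sub>v N" using Mc u by simp
  hence Atd: "A\<^sup>T *\<^sub>v d = 0\<^sub>v N" by (rule null_MT[OF d])
  have d2: "d \<bullet> u = 0"
  proof -
    have "(A\<^sup>T *\<^sub>v d) \<bullet> w = d \<bullet> (A *\<^sub>v w)" by (rule transpose_vec_mult_scalar[OF Ac w d])
    thus ?thesis unfolding Atd u_def using w by simp
  qed
  have "d \<bullet> d = d \<bullet> u - d \<bullet> ((M * X) *\<^sub>v u)" unfolding d_def
    by (rule scalar_prod_minus_distrib[OF _ u MXu], insert d, simp add: d_def)
  hence "d \<bullet> d = 0" using d1 d2 by simp
  hence d0: "d = 0\<^sub>v N" by (rule sprod_self_zero[OF d])
  have "(M * X * A) *\<^sub>v w = (M * X) *\<^sub>v u" unfolding u_def by (rule assoc_mult_mat_vec[OF MX Ac w])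
  also have "\<dots> = u"
  proof (rule eq_vecI)
    fix i assume "i < dim_vec u" hence i: "i < N" using u by simp
    have "d $ i = 0" using d0 i by simp
    moreover have dd: "dim_vec ((M * X) *\<^sub>v u) = N" using MXu by (rule carrier_vecD)
    have "d $ i = u $ i - ((M * X) *\<^sub>v u) $ i" unfolding d_def by (rule index_minus_vec(1), subst dd, rule i)
    ultimately show "((M * X) *\<^sub>v u) $ i = u $ i" by simp
  qed (insert u MXu, auto)
  finally show "(M * X * A) *\<^sub>v w = A *\<^sub>v w" unfolding u_def .
qed

end

lemma lin_append_minus:
  fixes a b c d :: "'a :: comm_ring_1 vec"
  assumes a: "a \<in> carrier_vec k" and c: "c \<in> carrier_vec k" and b: "b \<in> carrier_vec l" and d: "d \<in> carrier_vec l"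
  shows "x \<cdot>\<^sub>v (a @\<^sub>v b) - y \<cdot>\<^sub>v (c @\<^sub>v d) = (x \<cdot>\<^sub>v a - y \<cdot>\<^sub>v c) @\<^sub>v (x \<cdot>\<^sub>v b - y \<cdot>\<^sub>v d)"
  by (rule eq_vecI, insert a b c d, auto)

lemma lin_append_plus:
  fixes a b c d :: "'a :: comm_ring_1 vec"
  assumes a: "a \<in> carrier_vec k" and c: "c \<in> carrier_vec k" and b: "b \<in> carrier_vec l" and d: "d \<in> carrier_vec l"
  shows "x \<cdot>\<^sub>v (a @\<^sub>v b) + y \<cdot>\<^sub>v (c @\<^sub>v d) = (x \<cdot>\<^sub>v a + y \<cdot>\<^sub>v c) @\<^sub>v (x \<cdot>\<^sub>v b + y \<cdot>\<^sub>v d)"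
  by (rule eq_vecI, insert a b c d, auto)

lemma dot_comb_minus:
  fixes x u1 u2 v1 v2 :: "real vec"
  assumes "x \<in> carrier_vec k" "u1 \<in> carrier_vec k" "u2 \<in> carrier_vec k" "v1 \<in> carrier_vec k" "v2 \<in> carrier_vec k"
  shows "x \<bullet> (\<alpha> \<cdot>\<^sub>v (u1 + u2) - \<beta> \<cdot>\<^sub>v (v1 + v2)) = \<alpha> * (x \<bullet> u1 + x \<bullet> u2) - \<beta> * (x \<bullet> v1 + x \<bullet> v2)"
  using assms by (simp add: scalar_prod_def sum.distrib sum_subtractf sum_distrib_left algebra_simps)

lemma dot_comb_plus:
  fixes x u1 u2 v1 v2 :: "real vec"
  assumes "x \<in> carrier_vec k" "u1 \<in> carrier_vec k" "u2 \<in> carrier_vec k" "v1 \<in> carrier_vec k" "v2 \<in> carrier_vec k"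
  shows "x \<bullet> (\<alpha> \<cdot>\<^sub>v (u1 + u2) + \<beta> \<cdot>\<^sub>v (v1 + v2)) = \<alpha> * (x \<bullet> u1 + x \<bullet> u2) + \<beta> * (x \<bullet> v1 + x \<bullet> v2)"
  using assms by (simp add: scalar_prod_def sum.distrib sum_distrib_left algebra_simps)

lemma dot_add:
  fixes x u1 u2 :: "real vec"
  assumes "x \<in> carrier_vec k" "u1 \<in> carrier_vec k" "u2 \<in> carrier_vec k"
  shows "x \<bullet> (u1 + u2) = x \<bullet> u1 + x \<bullet> u2"
  using assms by (simp add: scalar_prod_def sum.distrib algebra_simps)

lemma smult_cancel_vec:
  fixes a b :: "complex vec"
  assumes "l \<noteq> 0" "a \<in> carrier_vec k" "b \<in> carrier_vec k" "l \<cdot>\<^sub>v a = l \<cdot>\<^sub>v b"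
  shows "a = b"
proof (rule eq_vecI)
  fix i assume "i < dim_vec b" hence i: "i < k" using assms by simp
  have "(l \<cdot>\<^sub>v a) $ i = (l \<cdot>\<^sub>v b) $ i" by (simp only: assms(4))
  hence "l * a $ i = l * b $ i" using i assms(2,3) by simp
  thus "a $ i = b $ i" using assms(1) by simp
qed (insert assms, auto)

lemma cmat_minus: "A \<in> carrier_mat r c \<Longrightarrow> B \<in> carrier_mat r c \<Longrightarrow> cmat (A - B) = cmat A - cmat B"
  by (intro eq_matI) auto

lemma cmat_mult: "A \<in> carrier_mat r k \<Longrightarrow> B \<in> carrier_mat k c \<Longrightarrow> cmat (A * B) = cmat A * cmat B"
  by (rule of_real_hom.mat_hom_mult)

lemma cmat_one: "cmat (1\<^sub>m k) = 1\<^sub>m k"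
  by (rule of_real_hom.mat_hom_one)

context setting
begin

abbreviation "Qm \<equiv> X * M"
abbreviation "Tm \<equiv> 1\<^sub>m N - X * A"

lemma Qmc: "Qm \<in> carrier_mat N N" using Xc Mc by auto
lemma Tmc: "Tm \<in> carrier_mat N N" using Xc Ac by auto
lemma XAc: "X * A \<in> carrier_mat N N" using Xc Ac by auto

lemma QQ: "Qm * Qm = Qm"
proof -
  have "Qm * Qm = (X * M * X) * M" by (rule assoc_mult_mat[symmetric, OF Qmc Xc Mc])
  thus ?thesis unfolding XMX .
qed

lemma QX: "Qm * X = X" by (rule XMX)

lemma Tv: "y \<in> carrier_vec N \<Longrightarrow> Tm *\<^sub>v y = y - X *\<^sub>v (A *\<^sub>v y)"
proof -
  assume y: "y \<in> carrier_vec N"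
  have "Tm *\<^sub>v y = 1\<^sub>m N *\<^sub>v y - (X * A) *\<^sub>v y" by (rule minus_mult_distrib_mat_vec[OF _ XAc y], simp)
  also have "(X * A) *\<^sub>v y = X *\<^sub>v (A *\<^sub>v y)" by (rule assoc_mult_mat_vec[OF Xc Ac y])
  finally show ?thesis using y by simp
qed

lemma Qv_idem: "v \<in> carrier_vec N \<Longrightarrow> Qm *\<^sub>v (Qm *\<^sub>v v) = Qm *\<^sub>v v"
  using assoc_mult_mat_vec[OF Qmc Qmc, of v, symmetric] QQ by simp

lemma QXv: "w \<in> carrier_vec N \<Longrightarrow> Qm *\<^sub>v (X *\<^sub>v w) = X *\<^sub>v w"
  using assoc_mult_mat_vec[OF Qmc Xc, of w, symmetric] QX by simp

lemma QC: "Qm * (Tm * Qm) = Tm * Qm"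
proof (rule mat_eq_by_vec[of _ N N])
  show "Qm * (Tm * Qm) \<in> carrier_mat N N" "Tm * Qm \<in> carrier_mat N N" using Qmc Tmc by auto
  fix v :: "real vec" assume v: "v \<in> carrier_vec N"
  define y where "y = Qm *\<^sub>v v"
  have y: "y \<in> carrier_vec N" unfolding y_def using Qmc v by auto
  have Ay: "A *\<^sub>v y \<in> carrier_vec N" using Ac y by auto
  have XAy: "X *\<^sub>v (A *\<^sub>v y) \<in> carrier_vec N" using Xc Ay by auto
  have e1: "(Tm * Qm) *\<^sub>v v = Tm *\<^sub>v y" unfolding y_def by (rule assoc_mult_mat_vec[OF Tmc Qmc v])
  have "(Qm * (Tm * Qm)) *\<^sub>v v = Qm *\<^sub>v ((Tm * Qm) *\<^sub>v v)"
    by (rule assoc_mult_mat_vec, insert Qmc Tmc v, auto)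
  also have "\<dots> = Qm *\<^sub>v (y - X *\<^sub>v (A *\<^sub>v y))" unfolding e1 Tv[OF y] ..
  also have "\<dots> = Qm *\<^sub>v y - Qm *\<^sub>v (X *\<^sub>v (A *\<^sub>v y))" by (rule mult_minus_distrib_mat_vec[OF Qmc y XAy])
  also have "Qm *\<^sub>v y = y" unfolding y_def by (rule Qv_idem[OF v])
  also have "Qm *\<^sub>v (X *\<^sub>v (A *\<^sub>v y)) = X *\<^sub>v (A *\<^sub>v y)" by (rule QXv[OF Ay])
  also have "y - X *\<^sub>v (A *\<^sub>v y) = (Tm * Qm) *\<^sub>v v" unfolding e1 Tv[OF y] ..
  finally show "(Qm * (Tm * Qm)) *\<^sub>v v = (Tm * Qm) *\<^sub>v v" .
qed

end

context setting
begin

lemma eig_complex: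
  assumes z: "z \<in> carrier_vec N" and z0: "z \<noteq> 0\<^sub>v N" and l0: "l \<noteq> 0"
    and ev: "cmat (Tm * Qm) *\<^sub>v z = l \<cdot>\<^sub>v z"
  shows "cmat Qm *\<^sub>v z = z \<and> cmat A *\<^sub>v z = (1 - l) \<cdot>\<^sub>v (cmat M *\<^sub>v z)"
proof -
  have cQ: "cmat Qm \<in> carrier_mat N N" and cT: "cmat Tm \<in> carrier_mat N N" and cX: "cmat X \<in> carrier_mat N N"
    and cA: "cmat A \<in> carrier_mat N N" and cM: "cmat M \<in> carrier_mat N N"
    using Qmc Tmc Xc Ac Mc by auto
  have TQ: "cmat (Tm * Qm) = cmat Tm * cmat Qm" by (rule cmat_mult[OF Tmc Qmc])
  have QTQ: "cmat (Qm * (Tm * Qm)) = cmat Qm * cmat (Tm * Qm)" by (rule cmat_mult[of _ N N _ N], insert Tmc Qmc, auto)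
  have cTQ: "cmat (Tm * Qm) \<in> carrier_mat N N" using Tmc Qmc by auto
  have Qz: "cmat Qm *\<^sub>v z \<in> carrier_vec N" using cQ z by auto
  have "l \<cdot>\<^sub>v (cmat Qm *\<^sub>v z) = cmat Qm *\<^sub>v (l \<cdot>\<^sub>v z)" using cQ z by (simp add: mult_mat_vec)
  also have "\<dots> = cmat Qm *\<^sub>v (cmat (Tm * Qm) *\<^sub>v z)" unfolding ev ..
  also have "\<dots> = (cmat Qm * cmat (Tm * Qm)) *\<^sub>v z" by (rule assoc_mult_mat_vec[symmetric, OF cQ cTQ z])
  also have "\<dots> = cmat (Tm * Qm) *\<^sub>v z" unfolding QTQ[symmetric] QC ..
  also have "\<dots> = l \<cdot>\<^sub>v z" by (rule ev)
  finally have Qzz: "cmat Qm *\<^sub>v z = z" by (rule smult_cancel_vec[OF l0 Qz z])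
  have "cmat Tm *\<^sub>v z = cmat Tm *\<^sub>v (cmat Qm *\<^sub>v z)" unfolding Qzz ..
  also have "\<dots> = cmat (Tm * Qm) *\<^sub>v z" unfolding TQ by (rule assoc_mult_mat_vec[symmetric, OF cT cQ z])
  finally have Tz: "cmat Tm *\<^sub>v z = l \<cdot>\<^sub>v z" unfolding ev .
  have cTe: "cmat Tm = 1\<^sub>m N - cmat X * cmat A"
    using cmat_minus[of "1\<^sub>m N" N N "X * A"] cmat_one[of N] cmat_mult[OF Xc Ac] XAc by simp
  define w where "w = cmat X *\<^sub>v (cmat A *\<^sub>v z)"
  have w: "w \<in> carrier_vec N" unfolding w_def using cX cA z by auto
  have "cmat Tm *\<^sub>v z = 1\<^sub>m N *\<^sub>v z - (cmat X * cmat A) *\<^sub>v z" unfolding cTe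
    by (rule minus_mult_distrib_mat_vec, insert cX cA z, auto)
  also have "(cmat X * cmat A) *\<^sub>v z = w" unfolding w_def by (rule assoc_mult_mat_vec[OF cX cA z])
  finally have "z - w = l \<cdot>\<^sub>v z" using Tz z by simp
  hence zw: "z - w = l \<cdot>\<^sub>v z" .
  have ww: "w = (1 - l) \<cdot>\<^sub>v z"
  proof (rule eq_vecI)
    fix i assume "i < dim_vec ((1 - l) \<cdot>\<^sub>v z)" hence i: "i < N" using z by simp
    have "(z - w) $ i = (l \<cdot>\<^sub>v z) $ i" by (simp only: zw)
    hence "z $ i - w $ i = l * z $ i" using i z w by simp
    thus "w $ i = ((1 - l) \<cdot>\<^sub>v z) $ i" using i z by (simp add: algebra_simps)
  qed (insert w z, auto)
  have "cmat A *\<^sub>v z = cmat (M * X * A) *\<^sub>v z" unfolding MXA ..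
  also have "cmat (M * X * A) = cmat M * cmat X * cmat A"
    using cmat_mult[of "M * X" N N A N] cmat_mult[OF Mc Xc] Mc Xc Ac by auto
  also have "(cmat M * cmat X * cmat A) *\<^sub>v z = cmat M *\<^sub>v w" unfolding w_def
    using cM cX cA z by (simp add: assoc_mult_mat_vec[of _ N N _ N])
  also have "\<dots> = (1 - l) \<cdot>\<^sub>v (cmat M *\<^sub>v z)" unfolding ww using cM z by (simp add: mult_mat_vec)
  finally show ?thesis using Qzz by simp
qed

lemma eig_lt1:
  assumes wb: "\<omega> > 1/2 * (1 + (spectral_radius (cmat K))^2)"
    and z: "z \<in> carrier_vec N" and z0: "z \<noteq> 0\<^sub>v N"
    and ev: "cmat (Tm * Qm) *\<^sub>v z = l \<cdot>\<^sub>v z"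
  shows "norm l < 1"
proof (cases "l = 0")
  case True thus ?thesis by simp
next
  case False
  from eig_complex[OF z z0 False ev] have Qzz: "cmat Qm *\<^sub>v z = z"
    and Az: "cmat A *\<^sub>v z = (1 - l) \<cdot>\<^sub>v (cmat M *\<^sub>v z)" by auto
  define \<alpha> where "\<alpha> = Re (1 - l)"
  define \<beta> where "\<beta> = Im (1 - l)"
  have ab: "\<alpha> \<noteq> 1 \<or> \<beta> \<noteq> 0" using False unfolding \<alpha>_def \<beta>_def by (auto simp: complex_eq_iff)
  define zr where "zr = map_vec Re z"
  define zi where "zi = map_vec Im z"
  have zr: "zr \<in> carrier_vec N" and zi: "zi \<in> carrier_vec N" unfolding zr_def zi_def using z by auto
  have Azr: "A *\<^sub>v zr = \<alpha> \<cdot>\<^sub>v (M *\<^sub>v zr) - \<beta> \<cdot>\<^sub>v (M *\<^sub>v zi)"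
    using arg_cong[OF Az, of "map_vec Re"] unfolding Re_mult_vec[OF Ac z] Re_smult_vec Re_mult_vec[OF Mc z]
    zr_def zi_def \<alpha>_def \<beta>_def .
  have Azi: "A *\<^sub>v zi = \<beta> \<cdot>\<^sub>v (M *\<^sub>v zr) + \<alpha> \<cdot>\<^sub>v (M *\<^sub>v zi)"
    using arg_cong[OF Az, of "map_vec Im"] unfolding Re_mult_vec[OF Ac z] Re_smult_vec Re_mult_vec[OF Mc z]
    zr_def zi_def \<alpha>_def \<beta>_def .
  have Qzr: "Qm *\<^sub>v zr = zr" using arg_cong[OF Qzz, of "map_vec Re"] unfolding Re_mult_vec[OF Qmc z] zr_def .
  have Qzi: "Qm *\<^sub>v zi = zi" using arg_cong[OF Qzz, of "map_vec Im"] unfolding Re_mult_vec[OF Qmc z] zi_def .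
  define p where "p = vec_first zr n"
  define r where "r = vec_last zr m"
  define q where "q = vec_first zi n"
  define s where "s = vec_last zi m"
  have p: "p \<in> carrier_vec n" and q: "q \<in> carrier_vec n" and r: "r \<in> carrier_vec m" and s: "s \<in> carrier_vec m"
    unfolding p_def q_def r_def s_def by auto
  have zrs: "zr = p @\<^sub>v r" unfolding p_def r_def using zr by simp
  have zis: "zi = q @\<^sub>v s" unfolding q_def s_def using zi by simp
  have nB: "- B \<in> carrier_mat m n" and Bt: "B\<^sup>T \<in> carrier_mat n m" using B by auto
  note bA = block_mult[OF Wc nB Bt]
  note bM = block_mult[OF Pc nB Bt]
  have Wp: "W *\<^sub>v p \<in> carrier_vec n" "W *\<^sub>v q \<in> carrier_vec n" "P *\<^sub>v p \<in> carrier_vec n" "P *\<^sub>v q \<in> carrier_vec n"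
    "B\<^sup>T *\<^sub>v r \<in> carrier_vec n" "B\<^sup>T *\<^sub>v s \<in> carrier_vec n" "(- B) *\<^sub>v p \<in> carrier_vec m" "(- B) *\<^sub>v q \<in> carrier_vec m"
    using mult_mat_vec_carrier[OF Wc p] mult_mat_vec_carrier[OF Wc q] mult_mat_vec_carrier[OF Pc p]
      mult_mat_vec_carrier[OF Pc q] mult_mat_vec_carrier[OF Bt r] mult_mat_vec_carrier[OF Bt s]
      mult_mat_vec_carrier[OF nB p] mult_mat_vec_carrier[OF nB q] by blast+
  have c1: "P *\<^sub>v p + B\<^sup>T *\<^sub>v r \<in> carrier_vec n" "P *\<^sub>v q + B\<^sup>T *\<^sub>v s \<in> carrier_vec n"
    "W *\<^sub>v p + B\<^sup>T *\<^sub>v r \<in> carrier_vec n" "W *\<^sub>v q + B\<^sup>T *\<^sub>v s \<in> carrier_vec n"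
    using Wp by (auto intro!: add_carrier_vec)
  have e1: "A *\<^sub>v zr = (W *\<^sub>v p + B\<^sup>T *\<^sub>v r) @\<^sub>v ((- B) *\<^sub>v p)" unfolding zrs by (rule bA[OF p r])
  have e1': "A *\<^sub>v zi = (W *\<^sub>v q + B\<^sup>T *\<^sub>v s) @\<^sub>v ((- B) *\<^sub>v q)" unfolding zis by (rule bA[OF q s])
  have e2: "M *\<^sub>v zr = (P *\<^sub>v p + B\<^sup>T *\<^sub>v r) @\<^sub>v ((- B) *\<^sub>v p)" unfolding zrs by (rule bM[OF p r])
  have e3: "M *\<^sub>v zi = (P *\<^sub>v q + B\<^sup>T *\<^sub>v s) @\<^sub>v ((- B) *\<^sub>v q)" unfolding zis by (rule bM[OF q s])
  have e4: "\<alpha> \<cdot>\<^sub>v ((P *\<^sub>v p + B\<^sup>T *\<^sub>v r) @\<^sub>v ((- B) *\<^sub>v p)) - \<beta> \<cdot>\<^sub>v ((P *\<^sub>v q + B\<^sup>T *\<^sub>v s) @\<^sub>v ((- B) *\<^sub>v q)) =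
    (\<alpha> \<cdot>\<^sub>v (P *\<^sub>v p + B\<^sup>T *\<^sub>v r) - \<beta> \<cdot>\<^sub>v (P *\<^sub>v q + B\<^sup>T *\<^sub>v s)) @\<^sub>v (\<alpha> \<cdot>\<^sub>v ((- B) *\<^sub>v p) - \<beta> \<cdot>\<^sub>v ((- B) *\<^sub>v q))"
    by (rule lin_append_minus[OF c1(1) c1(2) Wp(7) Wp(8)])
  have e5: "\<beta> \<cdot>\<^sub>v ((P *\<^sub>v p + B\<^sup>T *\<^sub>v r) @\<^sub>v ((- B) *\<^sub>v p)) + \<alpha> \<cdot>\<^sub>v ((P *\<^sub>v q + B\<^sup>T *\<^sub>v s) @\<^sub>v ((- B) *\<^sub>v q)) =
    (\<beta> \<cdot>\<^sub>v (P *\<^sub>v p + B\<^sup>T *\<^sub>v r) + \<alpha> \<cdot>\<^sub>v (P *\<^sub>v q + B\<^sup>T *\<^sub>v s)) @\<^sub>v (\<beta> \<cdot>\<^sub>v ((- B) *\<^sub>v p) + \<alpha> \<cdot>\<^sub>v ((- B) *\<^sub>v q))"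
    by (rule lin_append_plus[OF c1(1) c1(2) Wp(7) Wp(8)])
  have E12: "(W *\<^sub>v p + B\<^sup>T *\<^sub>v r) @\<^sub>v ((- B) *\<^sub>v p) =
    (\<alpha> \<cdot>\<^sub>v (P *\<^sub>v p + B\<^sup>T *\<^sub>v r) - \<beta> \<cdot>\<^sub>v (P *\<^sub>v q + B\<^sup>T *\<^sub>v s)) @\<^sub>v (\<alpha> \<cdot>\<^sub>v ((- B) *\<^sub>v p) - \<beta> \<cdot>\<^sub>v ((- B) *\<^sub>v q))"
    using Azr unfolding e1 e2 e3 e4 .
  have E34: "(W *\<^sub>v q + B\<^sup>T *\<^sub>v s) @\<^sub>v ((- B) *\<^sub>v q) =
    (\<beta> \<cdot>\<^sub>v (P *\<^sub>v p + B\<^sup>T *\<^sub>v r) + \<alpha> \<cdot>\<^sub>v (P *\<^sub>v q + B\<^sup>T *\<^sub>v s)) @\<^sub>v (\<beta> \<cdot>\<^sub>v ((- B) *\<^sub>v p) + \<alpha> \<cdot>\<^sub>v ((- B) *\<^sub>v q))"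
    using Azi unfolding e1' e2 e3 e5 .
  have c2: "\<alpha> \<cdot>\<^sub>v (P *\<^sub>v p + B\<^sup>T *\<^sub>v r) - \<beta> \<cdot>\<^sub>v (P *\<^sub>v q + B\<^sup>T *\<^sub>v s) \<in> carrier_vec n"
    "\<beta> \<cdot>\<^sub>v (P *\<^sub>v p + B\<^sup>T *\<^sub>v r) + \<alpha> \<cdot>\<^sub>v (P *\<^sub>v q + B\<^sup>T *\<^sub>v s) \<in> carrier_vec n"
    using c1 by (auto intro!: add_carrier_vec minus_carrier_vec smult_carrier_vec)
  from append_vec_eq[OF c1(3) c2(1), THEN iffD1, OF E12]
  have E1: "W *\<^sub>v p + B\<^sup>T *\<^sub>v r = \<alpha> \<cdot>\<^sub>v (P *\<^sub>v p + B\<^sup>T *\<^sub>v r) - \<beta> \<cdot>\<^sub>v (P *\<^sub>v q + B\<^sup>T *\<^sub>v s)"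
   and E2: "(- B) *\<^sub>v p = \<alpha> \<cdot>\<^sub>v ((- B) *\<^sub>v p) - \<beta> \<cdot>\<^sub>v ((- B) *\<^sub>v q)" by auto
  from append_vec_eq[OF c1(4) c2(2), THEN iffD1, OF E34]
  have E3: "W *\<^sub>v q + B\<^sup>T *\<^sub>v s = \<beta> \<cdot>\<^sub>v (P *\<^sub>v p + B\<^sup>T *\<^sub>v r) + \<alpha> \<cdot>\<^sub>v (P *\<^sub>v q + B\<^sup>T *\<^sub>v s)"
   and E4: "(- B) *\<^sub>v q = \<beta> \<cdot>\<^sub>v ((- B) *\<^sub>v p) + \<alpha> \<cdot>\<^sub>v ((- B) *\<^sub>v q)" by auto
  from two_by_two[OF Wp(7) Wp(8) E2 E4 ab]
  have "(- B) *\<^sub>v p = 0\<^sub>v m" "(- B) *\<^sub>v q = 0\<^sub>v m" by auto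
  hence Bp: "B *\<^sub>v p = 0\<^sub>v m" and Bq: "B *\<^sub>v q = 0\<^sub>v m" using neg_mult_zero[OF B] p q by auto
  have orth: "x \<bullet> (B\<^sup>T *\<^sub>v y) = 0" if x: "x \<in> carrier_vec n" and y: "y \<in> carrier_vec m" and Bx: "B *\<^sub>v x = 0\<^sub>v m" for x y
  proof -
    have "(B\<^sup>T *\<^sub>v y) \<bullet> x = y \<bullet> (B *\<^sub>v x)" by (rule transpose_vec_mult_scalar[OF B x y])
    thus ?thesis using x y B Bx by (simp add: comm_scalar_prod[of x n])
  qed
  have Hnn: "x \<bullet> (H *\<^sub>v x) \<ge> 0" if x: "x \<in> carrier_vec n" for x
  proof (cases "x = 0\<^sub>v n")
    case True thus ?thesis using Hc by (simp add: mult_zero_vec_right)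
  next
    case False thus ?thesis using H_pd x unfolding pos_def_mat_def by (auto intro: less_imp_le)
  qed
  show ?thesis
  proof (cases "p = 0\<^sub>v n \<and> q = 0\<^sub>v n")
    case True
    hence p0: "p = 0\<^sub>v n" and q0: "q = 0\<^sub>v n" by auto
    have W0: "W *\<^sub>v 0\<^sub>v n = 0\<^sub>v n" "P *\<^sub>v 0\<^sub>v n = 0\<^sub>v n" "(- B) *\<^sub>v 0\<^sub>v n = 0\<^sub>v m"
      using mult_zero_vec_right[OF Wc] mult_zero_vec_right[OF Pc] mult_zero_vec_right[OF nB] by auto
    have z1: "0\<^sub>v n + B\<^sup>T *\<^sub>v r = B\<^sup>T *\<^sub>v r" "0\<^sub>v n + B\<^sup>T *\<^sub>v s = B\<^sup>T *\<^sub>v s" using Wp(5,6) by auto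
    have F1: "B\<^sup>T *\<^sub>v r = \<alpha> \<cdot>\<^sub>v (B\<^sup>T *\<^sub>v r) - \<beta> \<cdot>\<^sub>v (B\<^sup>T *\<^sub>v s)"
      using E1 unfolding p0 q0 W0 z1 .
    have F3: "B\<^sup>T *\<^sub>v s = \<beta> \<cdot>\<^sub>v (B\<^sup>T *\<^sub>v r) + \<alpha> \<cdot>\<^sub>v (B\<^sup>T *\<^sub>v s)"
      using E3 unfolding p0 q0 W0 z1 .
    from two_by_two[OF Wp(5) Wp(6) F1 F3 ab] have Br: "B\<^sup>T *\<^sub>v r = 0\<^sub>v n" and Bs: "B\<^sup>T *\<^sub>v s = 0\<^sub>v n" by auto
    have Mzr: "M *\<^sub>v zr = 0\<^sub>v N" unfolding e2 p0 W0 Br by (simp add: zero_append_vec)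
    have Mzi: "M *\<^sub>v zi = 0\<^sub>v N" unfolding e3 q0 W0 Bs by (simp add: zero_append_vec)
    have "zr = Qm *\<^sub>v zr" using Qzr by simp
    also have "\<dots> = X *\<^sub>v (M *\<^sub>v zr)" by (rule assoc_mult_mat_vec[OF Xc Mc zr])
    finally have zr0: "zr = 0\<^sub>v N" unfolding Mzr using mult_zero_vec_right[OF Xc] by simp
    have "zi = Qm *\<^sub>v zi" using Qzi by simp
    also have "\<dots> = X *\<^sub>v (M *\<^sub>v zi)" by (rule assoc_mult_mat_vec[OF Xc Mc zi])
    finally have zi0: "zi = 0\<^sub>v N" unfolding Mzi using mult_zero_vec_right[OF Xc] by simp
    have "z = 0\<^sub>v N" by (rule Re_Im_zero[OF z], insert zr0 zi0, auto simp: zr_def zi_def)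
    with z0 show ?thesis by simp
  next
    case False
    define a where "a = p \<bullet> (H *\<^sub>v p) + q \<bullet> (H *\<^sub>v q)"
    have a0: "a > 0"
    proof -
      have "p \<bullet> (H *\<^sub>v p) > 0 \<or> q \<bullet> (H *\<^sub>v q) > 0" using False H_pd p q unfolding pos_def_mat_def by auto
      thus ?thesis unfolding a_def using Hnn[OF p] Hnn[OF q] by linarith
    qed
    have o1: "p \<bullet> (B\<^sup>T *\<^sub>v y) = 0" "q \<bullet> (B\<^sup>T *\<^sub>v y) = 0" if "y \<in> carrier_vec m" for y
      using orth[OF p that Bp] orth[OF q that Bq] by auto
    have R1: "p \<bullet> (W *\<^sub>v p) = \<alpha> * (p \<bullet> (P *\<^sub>v p)) - \<beta> * (p \<bullet> (P *\<^sub>v q))"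
    proof -
      have "p \<bullet> (W *\<^sub>v p + B\<^sup>T *\<^sub>v r) = p \<bullet> (\<alpha> \<cdot>\<^sub>v (P *\<^sub>v p + B\<^sup>T *\<^sub>v r) - \<beta> \<cdot>\<^sub>v (P *\<^sub>v q + B\<^sup>T *\<^sub>v s))"
        using E1 by simp
      thus ?thesis unfolding dot_add[OF p Wp(1) Wp(5)] dot_comb_minus[OF p Wp(3) Wp(5) Wp(4) Wp(6)]
        using o1[OF r] o1[OF s] by simp
    qed
    have R2: "q \<bullet> (W *\<^sub>v q) = \<beta> * (q \<bullet> (P *\<^sub>v p)) + \<alpha> * (q \<bullet> (P *\<^sub>v q))"
    proof -
      have "q \<bullet> (W *\<^sub>v q + B\<^sup>T *\<^sub>v s) = q \<bullet> (\<beta> \<cdot>\<^sub>v (P *\<^sub>v p + B\<^sup>T *\<^sub>v r) + \<alpha> \<cdot>\<^sub>v (P *\<^sub>v q + B\<^sup>T *\<^sub>v s))"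
        using E3 by simp
      thus ?thesis unfolding dot_add[OF q Wp(2) Wp(6)] dot_comb_plus[OF q Wp(3) Wp(5) Wp(4) Wp(6)]
        using o1[OF r] o1[OF s] by simp
    qed
    have R3: "q \<bullet> (W *\<^sub>v p) = \<alpha> * (q \<bullet> (P *\<^sub>v p)) - \<beta> * (q \<bullet> (P *\<^sub>v q))"
    proof -
      have "q \<bullet> (W *\<^sub>v p + B\<^sup>T *\<^sub>v r) = q \<bullet> (\<alpha> \<cdot>\<^sub>v (P *\<^sub>v p + B\<^sup>T *\<^sub>v r) - \<beta> \<cdot>\<^sub>v (P *\<^sub>v q + B\<^sup>T *\<^sub>v s))"
        using E1 by simp
      thus ?thesis unfolding dot_add[OF q Wp(1) Wp(5)] dot_comb_minus[OF q Wp(3) Wp(5) Wp(4) Wp(6)]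
        using o1[OF r] o1[OF s] by simp
    qed
    have R4: "p \<bullet> (W *\<^sub>v q) = \<beta> * (p \<bullet> (P *\<^sub>v p)) + \<alpha> * (p \<bullet> (P *\<^sub>v q))"
    proof -
      have "p \<bullet> (W *\<^sub>v q + B\<^sup>T *\<^sub>v s) = p \<bullet> (\<beta> \<cdot>\<^sub>v (P *\<^sub>v p + B\<^sup>T *\<^sub>v r) + \<alpha> \<cdot>\<^sub>v (P *\<^sub>v q + B\<^sup>T *\<^sub>v s))"
        using E3 by simp
      thus ?thesis unfolding dot_add[OF p Wp(2) Wp(6)] dot_comb_plus[OF p Wp(3) Wp(5) Wp(4) Wp(6)]
        using o1[OF r] o1[OF s] by simp
    qed
    have sP: "p \<bullet> (P *\<^sub>v q) = q \<bullet> (P *\<^sub>v p)" by (rule bl_P[OF p q])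
    have Pp: "p \<bullet> (P *\<^sub>v p) = \<omega> * (p \<bullet> (H *\<^sub>v p))" and Pq: "q \<bullet> (P *\<^sub>v q) = \<omega> * (q \<bullet> (H *\<^sub>v q))"
      by (rule qf_P[OF p], rule qf_P[OF q])
    have Wpp: "p \<bullet> (W *\<^sub>v p) = p \<bullet> (H *\<^sub>v p)" and Wqq: "q \<bullet> (W *\<^sub>v q) = q \<bullet> (H *\<^sub>v q)"
      using qf_H[OF p] qf_H[OF q] by auto
    have "a = \<alpha> * \<omega> * a" unfolding a_def using R1 R2 sP Pp Pq Wpp Wqq by (simp add: algebra_simps)
    hence aw: "\<alpha> * \<omega> = 1" using a0 by simp
    have "p \<bullet> (W *\<^sub>v q) - q \<bullet> (W *\<^sub>v p) = \<beta> * \<omega> * a" unfolding a_def using R3 R4 sP Pp Pq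
      by (simp add: algebra_simps)
    hence bS: "2 * (p \<bullet> (S *\<^sub>v q)) = \<beta> * \<omega> * a" using bl_S[OF p q] by simp
    define \<rho> where "\<rho> = spectral_radius (cmat K)"
    have "(\<beta> * \<omega> * a)^2 \<le> \<rho>^2 * a^2" using K_bound[OF p q] unfolding bS a_def \<rho>_def .
    hence "(\<beta> * \<omega>)^2 * a^2 \<le> \<rho>^2 * a^2" by (simp add: power_mult_distrib)
    hence bw: "(\<beta> * \<omega>)^2 \<le> \<rho>^2" using a0 by simp
    have wb': "1 + \<rho>^2 < 2 * \<omega>" using wb unfolding \<rho>_def by simp
    have key: "((1 - \<alpha>)^2 + \<beta>^2) * \<omega>^2 < 1 * \<omega>^2"
    proof -
      have "((1 - \<alpha>)^2 + \<beta>^2) * \<omega>^2 = (\<omega> - \<alpha> * \<omega>)^2 + (\<beta> * \<omega>)^2" by (simp add: power2_eq_square algebra_simps)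
      also have "\<dots> = (\<omega> - 1)^2 + (\<beta> * \<omega>)^2" unfolding aw ..
      also have "\<dots> \<le> (\<omega> - 1)^2 + \<rho>^2" using bw by simp
      also have "\<dots> < \<omega>^2" using wb' by (simp add: power2_eq_square algebra_simps)
      finally show ?thesis by simp
    qed
    hence lt: "(1 - \<alpha>)^2 + \<beta>^2 < 1" using \<omega>0 by (simp only: mult_less_cancel_right_pos zero_less_power2)
    have "Re l = 1 - \<alpha>" "Im l = - \<beta>" unfolding \<alpha>_def \<beta>_def by auto
    hence "(Re l)^2 + (Im l)^2 < 1" using lt by simp
    thus ?thesis unfolding cmod_def by simp
  qed
qed

end

context setting
begin

lemma rho_C:
  assumes wb: "\<omega> > 1/2 * (1 + (spectral_radius (cmat K))^2)"
  shows "spectral_radius (cmat (Tm * Qm)) < 1"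
proof -
  have C: "cmat (Tm * Qm) \<in> carrier_mat N N" using Tmc Qmc by auto
  have N0: "N > 0" using n0 by simp
  from spectral_radius_mem_max(1)[OF C N0] obtain e where e: "e \<in> spectrum (cmat (Tm * Qm))"
    and eq: "spectral_radius (cmat (Tm * Qm)) = norm e" by auto
  from e obtain z where "eigenvector (cmat (Tm * Qm)) z e" unfolding spectrum_def eigenvalue_def by auto
  hence z: "z \<in> carrier_vec N" "z \<noteq> 0\<^sub>v N" and ev: "cmat (Tm * Qm) *\<^sub>v z = e \<cdot>\<^sub>v z"
    unfolding eigenvector_def using C by auto
  show ?thesis unfolding eq by (rule eig_lt1[OF wb z ev])
qed

lemma decay:
  assumes wb: "\<omega> > 1/2 * (1 + (spectral_radius (cmat K))^2)"
    and u: "u \<in> carrier_vec N" and i: "i < N"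
  shows "(\<lambda>k. (((\<lambda>v. (Tm * Qm) *\<^sub>v v) ^^ k) u) $ i) \<longlonglongrightarrow> 0"
proof -
  define C where "C = Tm * Qm"
  have Cc: "C \<in> carrier_mat N N" unfolding C_def using Tmc Qmc by auto
  define \<rho> where "\<rho> = spectral_radius (cmat C)"
  have N0: "N > 0" using n0 by simp
  have r1: "\<rho> < 1" unfolding \<rho>_def C_def by (rule rho_C[OF wb])
  have r0: "\<rho> \<ge> 0" unfolding \<rho>_def by (rule spectral_radius_nonneg[OF _ N0], insert Cc, auto)
  define r where "r = (1 + \<rho>) / 2"
  have rr: "\<rho> < r" "r < 1" "r \<ge> 0" unfolding r_def using r1 r0 by auto
  from pow_entry_bound[OF Cc N0 rr(1)[unfolded \<rho>_def]] obtain c where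
    c: "\<And>k i j. i < N \<Longrightarrow> j < N \<Longrightarrow> \<bar>(C ^\<^sub>m k) $$ (i,j)\<bar> \<le> c * r^k" by auto
  define L where "L = (\<Sum>j<N. \<bar>u $ j\<bar>)"
  have bound: "\<bar>(((\<lambda>v. C *\<^sub>v v) ^^ k) u) $ i\<bar> \<le> (c * L) * r^k" for k
  proof -
    have "((\<lambda>v. C *\<^sub>v v) ^^ k) u = C ^\<^sub>m k *\<^sub>v u" using pow_mat_mult_vec_funpow[OF Cc u, of k] by simp
    hence "(((\<lambda>v. C *\<^sub>v v) ^^ k) u) $ i = (\<Sum>j<N. (C ^\<^sub>m k) $$ (i,j) * u $ j)"
      using i Cc u by (simp add: scalar_prod_def row_def atLeast0LessThan)
    also have "\<bar>\<dots>\<bar> \<le> (\<Sum>j<N. \<bar>(C ^\<^sub>m k) $$ (i,j) * u $ j\<bar>)" by (rule sum_abs)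
    also have "\<dots> \<le> (\<Sum>j<N. c * r^k * \<bar>u $ j\<bar>)"
      by (intro sum_mono, unfold abs_mult, rule mult_right_mono, insert c i, auto)
    also have "\<dots> = (c * L) * r^k" unfolding L_def by (simp add: sum_distrib_left ac_simps)
    finally show ?thesis .
  qed
  have lim: "(\<lambda>k. r^k) \<longlonglongrightarrow> 0"
    by (rule LIMSEQ_power_zero, insert rr, simp)
  have b2: "norm ((((\<lambda>v. C *\<^sub>v v) ^^ k) u) $ i) \<le> norm (r^k) * \<bar>c * L\<bar>" for k
  proof -
    have "(c * L) * r^k \<le> \<bar>c * L\<bar> * r^k" using rr by (intro mult_right_mono) auto
    thus ?thesis using bound[of k] rr by (simp add: abs_mult power_abs ac_simps)
  qed
  show ?thesis unfolding C_def[symmetric]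
    by (rule tendsto_0_le[OF lim, of _ "\<bar>c * L\<bar>"], rule always_eventually, insert b2, simp)
qed

end

theorem theorem2:
  fixes n m :: nat and W B :: "real mat" and b :: "real vec" and \<omega> :: real
  assumes W: "pos_def_mat n W"
    and B: "B \<in> carrier_mat m n"
    and rank: "vec_space.rank m B < m" and mn: "m \<le> n"
    and b: "b \<in> carrier_vec (n + m)"
    and b_range: "\<exists>y \<in> carrier_vec (n + m).
                    four_block_mat W B\<^sup>T (- B) (0\<^sub>m m m) *\<^sub>v y = b"
    and \<omega>_pos: "\<omega> > 0"
    and \<omega>_bound: "\<omega> > 1/2 * (1 + (spectral_radius (map_mat complex_of_real
          (inv_mat (spd_sqrt ((1/2) \<cdot>\<^sub>m (W + W\<^sup>T))) * ((1/2) \<cdot>\<^sub>m (W - W\<^sup>T))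
           * inv_mat (spd_sqrt ((1/2) \<cdot>\<^sub>m (W + W\<^sup>T))))))\<^sup>2)"
  shows "iteration_convergent (n + m) (four_block_mat W B\<^sup>T (- B) (0\<^sub>m m m))
           (four_block_mat (\<omega> \<cdot>\<^sub>m ((1/2) \<cdot>\<^sub>m (W + W\<^sup>T))) B\<^sup>T (- B) (0\<^sub>m m m)) b"
proof -
  have m0: "m > 0" using rank by simp
  have n0: "n > 0" using m0 mn by simp
  interpret setting n m W B \<omega> by (unfold_locales, insert W B \<omega>_pos n0, auto)
  show ?thesis unfolding iteration_convergent_def
  proof (intro ballI)
    fix x0 :: "real vec" assume x0: "x0 \<in> carrier_vec N"
    from b_range obtain y where y: "y \<in> carrier_vec N" and Ay: "A *\<^sub>v y = b" by auto
    define e0 where "e0 = x0 - y"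
    have e0: "e0 \<in> carrier_vec N" unfolding e0_def using x0 y by auto
    have Qe0: "Qm *\<^sub>v e0 \<in> carrier_vec N" using Qmc e0 by auto
    define d where "d = e0 - Qm *\<^sub>v e0"
    have d: "d \<in> carrier_vec N" unfolding d_def using e0 Qe0 by auto
    define f where "f k = ((\<lambda>v. (Tm * Qm) *\<^sub>v v) ^^ k) (Qm *\<^sub>v e0)" for k
    have C: "Tm * Qm \<in> carrier_mat N N" using Tmc Qmc by auto
    have fS: "f (Suc k) = (Tm * Qm) *\<^sub>v f k" for k unfolding f_def by simp
    have fc: "f k \<in> carrier_vec N" for k by (induct k, insert Qe0 C, auto simp: fS, simp add: f_def)
    have Qf: "Qm *\<^sub>v f k = f k" for k
    proof (cases k)
      case 0 thus ?thesis unfolding f_def using Qv_idem[OF e0] by simp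
    next
      case (Suc j)
      have "Qm *\<^sub>v f k = (Qm * (Tm * Qm)) *\<^sub>v f j" unfolding Suc fS
        by (rule assoc_mult_mat_vec[symmetric, OF Qmc C fc])
      thus ?thesis unfolding QC Suc fS .
    qed
    have fT: "f (Suc k) = f k - X *\<^sub>v (A *\<^sub>v f k)" for k
    proof -
      have "f (Suc k) = Tm *\<^sub>v (Qm *\<^sub>v f k)" unfolding fS by (rule assoc_mult_mat_vec[OF Tmc Qmc fc])
      thus ?thesis unfolding Qf Tv[OF fc] .
    qed
    have Ad: "A *\<^sub>v d = 0\<^sub>v N"
    proof (rule null_M[OF d])
      have MQ: "M * Qm = M" using assoc_mult_mat[OF Mc Xc Mc, symmetric] MXM by simp
      have "M *\<^sub>v d = M *\<^sub>v e0 - M *\<^sub>v (Qm *\<^sub>v e0)" unfolding d_def by (rule mult_minus_distrib_mat_vec[OF Mc e0 Qe0])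
      also have "M *\<^sub>v (Qm *\<^sub>v e0) = (M * Qm) *\<^sub>v e0" by (rule assoc_mult_mat_vec[symmetric, OF Mc Qmc e0])
      also have "\<dots> = M *\<^sub>v e0" unfolding MQ ..
      finally show "M *\<^sub>v d = 0\<^sub>v N" using Mc e0 by simp
    qed
    have it: "iterate A M b x0 k = y + d + f k" for k
    proof (induct k)
      case 0
      show ?case
      proof (rule eq_vecI)
        fix i assume "i < dim_vec (y + d + f 0)" hence i: "i < N" using y fc[of 0] by simp
        have dQ: "dim_vec (Qm *\<^sub>v e0) = N" by (rule carrier_vecD[OF Qe0])
        have f0: "f 0 = Qm *\<^sub>v e0" unfolding f_def by simp
        have s1: "(y + d + f 0) $ i = y $ i + d $ i + f 0 $ i" using i y d fc[of 0] by simp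
        have s2: "d $ i = e0 $ i - (Qm *\<^sub>v e0) $ i" unfolding d_def
          by (rule index_minus_vec(1), subst dQ, rule i)
        have s3: "e0 $ i = x0 $ i - y $ i" using i x0 y unfolding e0_def by simp
        have s4: "f 0 $ i = (Qm *\<^sub>v e0) $ i" unfolding f0 ..
        have s5: "iterate A M b x0 0 $ i = x0 $ i" by simp
        show "iterate A M b x0 0 $ i = (y + d + f 0) $ i" unfolding s5 s1 s4 s2 s3 by simp
      qed (insert x0 y fc[of 0], simp)
    next
      case (Suc k)
      define v where "v = y + d + f k"
      have v: "v \<in> carrier_vec N" unfolding v_def using y d fc by auto
      have Afk: "A *\<^sub>v f k \<in> carrier_vec N" using Ac fc by auto
      have XAfk: "X *\<^sub>v (A *\<^sub>v f k) \<in> carrier_vec N" using Xc Afk by auto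
      have "A *\<^sub>v v = A *\<^sub>v (y + d) + A *\<^sub>v f k" unfolding v_def
        by (rule mult_add_distrib_mat_vec[OF Ac _ fc], insert y d, auto)
      also have "A *\<^sub>v (y + d) = A *\<^sub>v y + A *\<^sub>v d" by (rule mult_add_distrib_mat_vec[OF Ac y d])
      finally have Av: "A *\<^sub>v v = A *\<^sub>v y + A *\<^sub>v d + A *\<^sub>v f k" .
      have bAv: "b - A *\<^sub>v v = - (A *\<^sub>v f k)"
      proof (rule eq_vecI)
        fix i assume "i < dim_vec (- (A *\<^sub>v f k))" hence i: "i < N" using Afk by simp
        show "(b - A *\<^sub>v v) $ i = (- (A *\<^sub>v f k)) $ i"
          unfolding Av Ay[symmetric] Ad using i Ac y d fc by simp
      qed (insert b Ac v fc, auto)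
      have Xm: "X *\<^sub>v (- (A *\<^sub>v f k)) = - (X *\<^sub>v (A *\<^sub>v f k))"
        using Xc Afk by (intro eq_vecI) auto
      have "iterate A M b x0 (Suc k) = v + X *\<^sub>v (b - A *\<^sub>v v)" using Suc unfolding v_def by simp
      also have "\<dots> = v + - (X *\<^sub>v (A *\<^sub>v f k))" unfolding bAv Xm ..
      also have "\<dots> = y + d + f (Suc k)" unfolding fT v_def
        by (rule eq_vecI, insert y d fc XAfk, auto)
      finally show ?case .
    qed
    show "\<exists>L\<in>carrier_vec N. \<forall>i<N. (\<lambda>k. iterate A M b x0 k $ i) \<longlonglongrightarrow> L $ i"
    proof (intro bexI allI impI)
      show "y + d \<in> carrier_vec N" using y d by auto
      fix i assume i: "i < N"
      have eq: "iterate A M b x0 k $ i = (y + d) $ i + f k $ i" for k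
        unfolding it using i y d fc[of k] by simp
      have "(\<lambda>k. f k $ i) \<longlonglongrightarrow> 0" unfolding f_def by (rule decay[OF \<omega>_bound Qe0 i])
      hence "(\<lambda>k. (y + d) $ i + f k $ i) \<longlonglongrightarrow> (y + d) $ i + 0" by (intro tendsto_add) auto
      thus "(\<lambda>k. iterate A M b x0 k $ i) \<longlonglongrightarrow> (y + d) $ i" unfolding eq by simp
    qed
  qed
qed

end
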